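(* Let $0<\rho<1$, $n\geq1$, $m\geq2$, $a_{1},\ldots,a_{m}>0$ with $\sum_{i}a_{i}=1$, and let $\Omega_{1},\ldots,\Omega_{m}\subset\mathbb{R}^{n+1}$ be measurable sets forming a partition of $\mathbb{R}^{n+1}$ with $\gamma_{n+1}(\Omega_{i})=a_{i}$ that maximize $\sum_{i=1}^{m}\int_{\mathbb{R}^{n+1}}1_{\Omega_{i}}T_{\rho}1_{\Omega_{i}}\gamma_{n+1}\,dx$ among such partitions. Then for all $1\leq i<j\leq m$ there exists $c_{ij}\in\mathbb{R}$ such that $$T_{\rho}(1_{\Omega_{i}}-1_{\Omega_{j}})(x)=c_{ij},\qquad\forall\,x\in\Sigma_{ij}.$$
   Context: $\gamma_{n+1}(x)=(2\pi)^{-(n+1)/2}e^{-\|x\|^{2}/2}$, $\gamma_{n+1}(\Omega)=\int_{\Omega}\gamma_{n+1}$; $T_{\rho}f(x)=\int_{\mathbb{R}^{n+1}}f(x\rho+y\sqrt{1-\rho^{2}})\gamma_{n+1}(y)\,dy$. For a set $\Omega$ of locally finite surface area (so that $\nabla1_{\Omega}$ is a vector-valued Radon measure), the reduced boundary $\partial^{*}\Omega$ is the set of $x$ such that $N(x)=-\lim_{r\to0^{+}}\nabla1_{\Omega}(B(x,r))/\|\nabla1_{\Omega}\|(B(x,r))$ exists and is a unit vector. $\Sigma_{ij}=(\partial^{*}\Omega_{i})\cap(\partial^{*}\Omega_{j})$. *)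

theory Defs
  imports "HOL-Analysis.Analysis"
begin

definition gauss_dens :: "'a::euclidean_space \<Rightarrow> real" where
  "gauss_dens x = (2 * pi) powr (- real DIM('a) / 2) * exp (- (norm x)\<^sup>2 / 2)"

definition gauss_measure :: "'a::euclidean_space set \<Rightarrow> real" where
  "gauss_measure \<Omega> = (\<integral>x. indicator \<Omega> x * gauss_dens x \<partial>lebesgue)"

definition ou_op :: "real \<Rightarrow> ('a::euclidean_space \<Rightarrow> real) \<Rightarrow> 'a \<Rightarrow> real" where
  "ou_op \<rho> f x = (\<integral>y. f (\<rho> *\<^sub>R x + sqrt (1 - \<rho>\<^sup>2) *\<^sub>R y) * gauss_dens y \<partial>lebesgue)"

definition noise_stab :: "real \<Rightarrow> nat \<Rightarrow> (nat \<Rightarrow> 'a::euclidean_space set) \<Rightarrow> real" where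
  "noise_stab \<rho> m \<Omega> = (\<Sum>i<m. \<integral>x. indicator (\<Omega> i) x * ou_op \<rho> (indicator (\<Omega> i)) x * gauss_dens x \<partial>lebesgue)"

definition is_partition :: "nat \<Rightarrow> (nat \<Rightarrow> 'a::euclidean_space set) \<Rightarrow> bool" where
  "is_partition m \<Omega> \<longleftrightarrow> (\<forall>i<m. \<Omega> i \<in> sets lebesgue)
     \<and> (\<forall>i<m. \<forall>j<m. i \<noteq> j \<longrightarrow> \<Omega> i \<inter> \<Omega> j = {})
     \<and> (\<Union>i<m. \<Omega> i) = UNIV"

definition C1c_field :: "('a::euclidean_space \<Rightarrow> 'a) \<Rightarrow> ('a \<Rightarrow> 'a \<Rightarrow>\<^sub>L 'a) \<Rightarrow> bool" where
  "C1c_field \<phi> \<phi>' \<longleftrightarrow> (\<forall>x. (\<phi> has_derivative blinfun_apply (\<phi>' x)) (at x))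
     \<and> continuous_on UNIV \<phi>' \<and> compact (closure {x. \<phi> x \<noteq> 0})"

definition divergence :: "('a::euclidean_space \<Rightarrow> 'a \<Rightarrow>\<^sub>L 'a) \<Rightarrow> 'a \<Rightarrow> real" where
  "divergence \<phi>' x = (\<Sum>b\<in>Basis. blinfun_apply (\<phi>' x) b \<bullet> b)"

text \<open>gradient_rep Omega mu sigma: the distributional gradient of 1_Omega is the vector-valued
  Radon measure sigma mu, i.e. mu is a locally finite Borel measure (= total variation),
  |sigma| = 1 mu-a.e., and  int phi . d(grad 1_Omega) = - int_Omega div phi  for all C^1_c fields.
  Omega has locally finite surface area iff such a representation exists.\<close>
definition gradient_rep :: "'a::euclidean_space set \<Rightarrow> 'a measure \<Rightarrow> ('a \<Rightarrow> 'a) \<Rightarrow> bool" where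
  "gradient_rep \<Omega> \<mu> \<sigma> \<longleftrightarrow> sets \<mu> = sets borel
     \<and> (\<forall>K. compact K \<longrightarrow> emeasure \<mu> K < \<infinity>)
     \<and> \<sigma> \<in> borel_measurable \<mu>
     \<and> (AE x in \<mu>. norm (\<sigma> x) = 1)
     \<and> (\<forall>\<phi> \<phi>'. C1c_field \<phi> \<phi>' \<longrightarrow>
          (\<integral>x. \<phi> x \<bullet> \<sigma> x \<partial>\<mu>) = - (\<integral>x. indicator \<Omega> x * divergence \<phi>' x \<partial>lebesgue))"

definition reduced_boundary :: "'a::euclidean_space set \<Rightarrow> 'a set" where
  "reduced_boundary \<Omega> = {x. \<exists>\<mu> \<sigma>. gradient_rep \<Omega> \<mu> \<sigma> \<and>
     (\<exists>N. norm N = 1 \<and>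
       ((\<lambda>r. - ((1 / measure \<mu> (ball x r)) *\<^sub>R (\<integral>y. indicator (ball x r) y *\<^sub>R \<sigma> y \<partial>\<mu>))) \<longlongrightarrow> N)
         (at_right 0))}"

end

theory Submission
  imports Defs
begin

lemma borel_leb: "f \<in> borel_measurable borel \<Longrightarrow> f \<in> borel_measurable (lebesgue :: 'a::euclidean_space measure)"
  by (metis comp_id id_borel_measurable_lebesgue measurable_comp)

lemma gd_pos: "gauss_dens x > 0"
  unfolding gauss_dens_def by simp

lemma gd_le: "gauss_dens (x::'a::euclidean_space) \<le> (2 * pi) powr (- real DIM('a) / 2)"
  unfolding gauss_dens_def by simp

lemma gd_cont: "continuous_on UNIV (gauss_dens :: 'a::euclidean_space \<Rightarrow> real)"
  unfolding gauss_dens_def[abs_def] by (intro continuous_intros) auto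

lemma gd_borel[measurable]: "gauss_dens \<in> borel_measurable (borel :: 'a::euclidean_space measure)"
  using gd_cont by (intro borel_measurable_continuous_onI)

lemma gd_meas[measurable]: "gauss_dens \<in> borel_measurable (lebesgue :: 'a::euclidean_space measure)"
  by (rule borel_leb) measurable

lemma sf_leb: "sigma_finite_measure (lebesgue :: 'a::euclidean_space measure)"
  unfolding sigma_finite_measure_def
proof (intro exI[of _ "range (\<lambda>n::nat. cball (0::'a) (real n))"] conjI)
  show "countable (range (\<lambda>n::nat. cball (0::'a) (real n)))" by simp
  show "range (\<lambda>n::nat. cball (0::'a) (real n)) \<subseteq> sets lebesgue" by auto
  show "\<Union> (range (\<lambda>n::nat. cball (0::'a) (real n))) = space lebesgue"
    by (auto simp: real_arch_simple)
  show "\<forall>a\<in>range (\<lambda>n::nat. cball (0::'a) (real n)). emeasure lebesgue a \<noteq> \<infinity>"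
    using emeasure_lborel_cball_finite[of "0::'a"] by (auto simp: emeasure_completion) (metis less_irrefl)
qed

interpretation leb: sigma_finite_measure "lebesgue :: 'a::euclidean_space measure"
  by (rule sf_leb)

interpretation leb2: pair_sigma_finite "lebesgue :: 'a::euclidean_space measure" "lebesgue :: 'a::euclidean_space measure" ..

lemma lebesgue_affine:
  fixes t :: "'a::euclidean_space"
  assumes "c \<noteq> 0"
  shows "lebesgue = density (distr lebesgue lebesgue (\<lambda>x. t + c *\<^sub>R x)) (\<lambda>_. \<bar>c\<bar>^DIM('a))"
    and "(\<lambda>x. t + c *\<^sub>R x) \<in> lebesgue \<rightarrow>\<^sub>M lebesgue"
  using lebesgue_affine_euclidean[where c="\<lambda>_::'a. c" and t=t] lebesgue_affine_measurable[where c="\<lambda>_::'a. c" and t=t] assms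
  unfolding scaleR_scaleR[symmetric] scaleR_sum_right[symmetric] euclidean_representation prod_constant by simp_all

lemma sub_integral:
  fixes t :: "'a::euclidean_space" and f :: "'a \<Rightarrow> real"
  assumes "c \<noteq> 0" and [measurable]: "f \<in> borel_measurable lebesgue"
  shows "integral\<^sup>L lebesgue f = \<bar>c\<bar>^DIM('a) * (\<integral>y. f (t + c *\<^sub>R y) \<partial>lebesgue)"
    and "integrable lebesgue f \<longleftrightarrow> integrable lebesgue (\<lambda>y. f (t + c *\<^sub>R y))"
proof -
  note m = lebesgue_affine(2)[OF assms(1), of t]
  show "integral\<^sup>L lebesgue f = \<bar>c\<bar>^DIM('a) * (\<integral>y. f (t + c *\<^sub>R y) \<partial>lebesgue)"
    apply (subst lebesgue_affine(1)[OF assms(1), of t])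
    apply (subst integral_density)
    using m by (auto simp: integral_distr)
  show "integrable lebesgue f \<longleftrightarrow> integrable lebesgue (\<lambda>y. f (t + c *\<^sub>R y))"
    apply (subst lebesgue_affine(1)[OF assms(1), of t])
    apply (subst integrable_density)
    using m assms(1) by (auto simp: integrable_distr_eq)
qed


lemma id_leb_borel[measurable]: "(\<lambda>x::'a::euclidean_space. x) \<in> borel_measurable lebesgue"
  using id_borel_measurable_lebesgue by (simp add: id_def)

definition cd :: "'a::euclidean_space itself \<Rightarrow> real" where
  "cd _ = (2 * pi) powr (- real DIM('a) / 2)"

lemma gd_eq: "gauss_dens (x::'a::euclidean_space) = cd TYPE('a) * exp (- (norm x)\<^sup>2 / 2)"
  unfolding gauss_dens_def cd_def by simp

lemma cd_pos: "cd TYPE('a::euclidean_space) > 0"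
  unfolding cd_def by simp

definition kern :: "real \<Rightarrow> 'a::euclidean_space \<Rightarrow> 'a \<Rightarrow> real" where
  "kern \<rho> x z = gauss_dens ((1 / sqrt (1 - \<rho>\<^sup>2)) *\<^sub>R (z - \<rho> *\<^sub>R x)) / sqrt (1 - \<rho>\<^sup>2) ^ DIM('a)"

lemma kern_eq:
  assumes "0 < \<rho>" "\<rho> < 1"
  shows "kern \<rho> x (z::'a::euclidean_space) = cd TYPE('a) / sqrt (1 - \<rho>\<^sup>2) ^ DIM('a) * exp (- (norm (z - \<rho> *\<^sub>R x))\<^sup>2 / (2 * (1 - \<rho>\<^sup>2)))"
proof -
  have s: "sqrt (1 - \<rho>\<^sup>2) > 0" using assms by (simp add: power_less_one_iff abs_less_iff)
  have "(norm ((1 / sqrt (1 - \<rho>\<^sup>2)) *\<^sub>R (z - \<rho> *\<^sub>R x)))\<^sup>2 = (norm (z - \<rho> *\<^sub>R x))\<^sup>2 / (1 - \<rho>\<^sup>2)"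
    using s by (simp add: power_mult_distrib power_divide)
  then show ?thesis unfolding kern_def gd_eq by simp
qed


lemma kern_leb2[measurable]: "(\<lambda>p. kern \<rho> (fst p) (snd p)) \<in> borel_measurable (lebesgue \<Otimes>\<^sub>M (lebesgue :: 'a::euclidean_space measure))"
  unfolding kern_def by measurable

lemma kern_leb[measurable]: "kern \<rho> x \<in> borel_measurable (lebesgue :: 'a::euclidean_space measure)"
  unfolding kern_def by measurable

lemma s_pos: "0 < \<rho> \<Longrightarrow> \<rho> < 1 \<Longrightarrow> sqrt (1 - \<rho>\<^sup>2) > 0"
  by (simp add: power_less_one_iff abs_less_iff)

lemma kern_nonneg: "0 < \<rho> \<Longrightarrow> \<rho> < 1 \<Longrightarrow> kern \<rho> x z \<ge> 0"
  unfolding kern_def using gd_pos[of "(1 / sqrt (1 - \<rho>\<^sup>2)) *\<^sub>R (z - \<rho> *\<^sub>R x)"] s_pos[of \<rho>] by simp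


lemma absle: "\<bar>a\<bar> \<le> 1 \<Longrightarrow> 0 \<le> k \<Longrightarrow> \<bar>a * k\<bar> \<le> (k::real)"
  by (simp add: abs_mult mult_left_le_one_le)

locale gctx =
  fixes \<rho> :: real
  assumes r0: "0 < \<rho>" and r1: "\<rho> < 1"
    and gint: "integrable lebesgue (gauss_dens :: 'a::euclidean_space \<Rightarrow> real)"
    and gone: "(\<integral>x. gauss_dens (x::'a) \<partial>lebesgue) = 1"

context gctx
begin

lemma kern_shift: "kern \<rho> x (\<rho> *\<^sub>R x + sqrt (1 - \<rho>\<^sup>2) *\<^sub>R y) = gauss_dens y / sqrt (1 - \<rho>\<^sup>2) ^ DIM('a)"
  for x y :: 'a
  using s_pos[OF r0 r1] unfolding kern_def by simp

lemma kern_int: "integrable lebesgue (kern \<rho> (x::'a))" and kern_one: "(\<integral>z. kern \<rho> (x::'a) z \<partial>lebesgue) = 1"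
proof -
  let ?s = "sqrt (1 - \<rho>\<^sup>2)"
  have s: "?s > 0" using s_pos[OF r0 r1] .
  have "integrable lebesgue (\<lambda>y. kern \<rho> x (\<rho> *\<^sub>R x + ?s *\<^sub>R y))"
    unfolding kern_shift using gint by simp
  then show "integrable lebesgue (kern \<rho> x)"
    using sub_integral(2)[of ?s "kern \<rho> x" "\<rho> *\<^sub>R x"] s by simp
  have "(\<integral>z. kern \<rho> x z \<partial>lebesgue) = \<bar>?s\<bar> ^ DIM('a) * (\<integral>y. kern \<rho> x (\<rho> *\<^sub>R x + ?s *\<^sub>R y) \<partial>lebesgue)"
    using sub_integral(1)[of ?s "kern \<rho> x" "\<rho> *\<^sub>R x"] s by simp
  also have "\<dots> = 1" unfolding kern_shift using s gone by simp
  finally show "(\<integral>z. kern \<rho> x z \<partial>lebesgue) = 1" .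
qed

lemma ou_kern:
  fixes w :: "'a \<Rightarrow> real"
  assumes [measurable]: "w \<in> borel_measurable lebesgue"
  shows "ou_op \<rho> w x = (\<integral>z. w z * kern \<rho> x z \<partial>lebesgue)"
proof -
  let ?s = "sqrt (1 - \<rho>\<^sup>2)"
  have s: "?s > 0" using s_pos[OF r0 r1] .
  have "(\<integral>z. w z * kern \<rho> x z \<partial>lebesgue) = \<bar>?s\<bar> ^ DIM('a) * (\<integral>y. w (\<rho> *\<^sub>R x + ?s *\<^sub>R y) * kern \<rho> x (\<rho> *\<^sub>R x + ?s *\<^sub>R y) \<partial>lebesgue)"
    using sub_integral(1)[of ?s "\<lambda>z. w z * kern \<rho> x z" "\<rho> *\<^sub>R x"] s by simp
  also have "\<dots> = ?s ^ DIM('a) * (\<integral>y. (1 / ?s ^ DIM('a)) * (w (\<rho> *\<^sub>R x + ?s *\<^sub>R y) * gauss_dens y) \<partial>lebesgue)"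
    unfolding kern_shift using s by simp
  also have "\<dots> = ou_op \<rho> w x"
    unfolding ou_op_def integral_mult_right_zero using s by simp
  finally show ?thesis by simp
qed

lemma ou_int:
  fixes w :: "'a \<Rightarrow> real"
  assumes [measurable]: "w \<in> borel_measurable lebesgue" and wb: "\<And>z. \<bar>w z\<bar> \<le> 1"
  shows "integrable lebesgue (\<lambda>z. w z * kern \<rho> x z)" and "\<bar>ou_op \<rho> w x\<bar> \<le> 1"
proof -
  have m: "(\<lambda>z. w z * kern \<rho> x z) \<in> borel_measurable lebesgue" by measurable
  show i: "integrable lebesgue (\<lambda>z. w z * kern \<rho> x z)"
    apply (rule Bochner_Integration.integrable_bound[OF kern_int[of x] m])
  proof (intro AE_I2)
    fix z show "norm (w z * kern \<rho> x z) \<le> norm (kern \<rho> x z)"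
      using absle[OF wb[of z] kern_nonneg[OF r0 r1, of x z]] kern_nonneg[OF r0 r1, of x z] by simp
  qed
  have "\<bar>ou_op \<rho> w x\<bar> \<le> (\<integral>z. kern \<rho> x z \<partial>lebesgue)"
    unfolding ou_kern[OF assms(1)]
    apply (rule integral_abs_bound_integral[OF i kern_int])
    using wb kern_nonneg[OF r0 r1] by (auto intro!: absle)
  then show "\<bar>ou_op \<rho> w x\<bar> \<le> 1" using kern_one by simp
qed

lemma ou_add:
  fixes u v :: "'a \<Rightarrow> real"
  assumes [measurable]: "u \<in> borel_measurable lebesgue" "v \<in> borel_measurable lebesgue"
    and "\<And>z. \<bar>u z\<bar> \<le> 1" "\<And>z. \<bar>v z\<bar> \<le> 1"
  shows "ou_op \<rho> (\<lambda>z. u z + v z) x = ou_op \<rho> u x + ou_op \<rho> v x"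
    and "ou_op \<rho> (\<lambda>z. u z - v z) x = ou_op \<rho> u x - ou_op \<rho> v x"
proof -
  have iu: "integrable lebesgue (\<lambda>z. u z * kern \<rho> x z)" using ou_int assms by blast
  have iv: "integrable lebesgue (\<lambda>z. v z * kern \<rho> x z)" using ou_int assms by blast
  show "ou_op \<rho> (\<lambda>z. u z + v z) x = ou_op \<rho> u x + ou_op \<rho> v x"
    using Bochner_Integration.integral_add[OF iu iv]
    by (simp add: ou_kern distrib_right)
  show "ou_op \<rho> (\<lambda>z. u z - v z) x = ou_op \<rho> u x - ou_op \<rho> v x"
    using Bochner_Integration.integral_diff[OF iu iv]
    by (simp add: ou_kern left_diff_distrib)
qed


lemma Kint: "integrable lebesgue (\<lambda>z. gauss_dens x * kern \<rho> (x::'a) z)"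
  using kern_int by simp

lemma expo_sym:
  fixes x z :: 'a
  shows "- (norm x)\<^sup>2 / 2 + - (norm (z - \<rho> *\<^sub>R x))\<^sup>2 / (2 * (1 - \<rho>\<^sup>2)) =
         - ((norm x)\<^sup>2 + (norm z)\<^sup>2 - 2 * \<rho> * (x \<bullet> z)) / (2 * (1 - \<rho>\<^sup>2))"
proof -
  have p: "1 - \<rho>\<^sup>2 > 0" using r0 r1 by (simp add: power_less_one_iff abs_less_iff)
  have "(norm (z - \<rho> *\<^sub>R x))\<^sup>2 = (z - \<rho> *\<^sub>R x) \<bullet> (z - \<rho> *\<^sub>R x)" by (rule power2_norm_eq_inner)
  also have "\<dots> = z \<bullet> z - 2 * \<rho> * (x \<bullet> z) + \<rho>\<^sup>2 * (x \<bullet> x)"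
    by (simp add: inner_diff_left inner_diff_right inner_commute algebra_simps power2_eq_square)
  finally have n: "(norm (z - \<rho> *\<^sub>R x))\<^sup>2 = (norm z)\<^sup>2 - 2 * \<rho> * (x \<bullet> z) + \<rho>\<^sup>2 * (norm x)\<^sup>2"
    by (simp add: power2_norm_eq_inner)
  show ?thesis using p unfolding n by (simp add: field_simps)
qed

lemma K_sym: "gauss_dens x * kern \<rho> x z = gauss_dens z * kern \<rho> z (x::'a)"
proof -
  have "gauss_dens x * kern \<rho> x z = cd TYPE('a) * (cd TYPE('a) / sqrt (1 - \<rho>\<^sup>2) ^ DIM('a)) *
      exp (- (norm x)\<^sup>2 / 2 + - (norm (z - \<rho> *\<^sub>R x))\<^sup>2 / (2 * (1 - \<rho>\<^sup>2)))"
    unfolding gd_eq kern_eq[OF r0 r1] exp_add by simp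
  also have "\<dots> = cd TYPE('a) * (cd TYPE('a) / sqrt (1 - \<rho>\<^sup>2) ^ DIM('a)) *
      exp (- (norm z)\<^sup>2 / 2 + - (norm (x - \<rho> *\<^sub>R z))\<^sup>2 / (2 * (1 - \<rho>\<^sup>2)))"
    unfolding expo_sym by (simp add: inner_commute add.commute)
  also have "\<dots> = gauss_dens z * kern \<rho> z x"
    unfolding gd_eq kern_eq[OF r0 r1] exp_add by simp
  finally show ?thesis .
qed

lemma step1:
  fixes u v :: "'a \<Rightarrow> real"
  assumes [measurable]: "u \<in> borel_measurable lebesgue" "v \<in> borel_measurable lebesgue"
  shows "(\<integral>x. u x * ou_op \<rho> v x * gauss_dens x \<partial>lebesgue) =
         (\<integral>x. (\<integral>z. u x * v z * (gauss_dens x * kern \<rho> x z) \<partial>lebesgue) \<partial>lebesgue)"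
proof (rule Bochner_Integration.integral_cong[OF refl])
  fix x
  have "u x * ou_op \<rho> v x * gauss_dens x = (u x * gauss_dens x) * (\<integral>z. v z * kern \<rho> x z \<partial>lebesgue)"
    using ou_kern[OF assms(2)] by simp
  also have "\<dots> = (\<integral>z. (u x * gauss_dens x) * (v z * kern \<rho> x z) \<partial>lebesgue)"
    by simp
  finally show "u x * ou_op \<rho> v x * gauss_dens x = (\<integral>z. u x * v z * (gauss_dens x * kern \<rho> x z) \<partial>lebesgue)"
    by (simp add: ac_simps)
qed

lemma Fint:
  fixes u v :: "'a \<Rightarrow> real"
  assumes [measurable]: "u \<in> borel_measurable lebesgue" "v \<in> borel_measurable lebesgue"
    and ub: "\<And>z. \<bar>u z\<bar> \<le> 1" and vb: "\<And>z. \<bar>v z\<bar> \<le> 1"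
  shows "integrable (lebesgue \<Otimes>\<^sub>M lebesgue) (\<lambda>(x,z). u x * v z * (gauss_dens x * kern \<rho> x z))"
proof (rule leb2.Fubini_integrable)
  show "(\<lambda>(x,z). u x * v z * (gauss_dens x * kern \<rho> x z)) \<in> borel_measurable (lebesgue \<Otimes>\<^sub>M lebesgue)"
    by measurable
  have b: "\<bar>u x * v z * (gauss_dens x * kern \<rho> x z)\<bar> \<le> gauss_dens x * kern \<rho> x z" for x z
  proof -
    have "\<bar>u x * v z\<bar> \<le> 1" using ub[of x] vb[of z] by (simp add: abs_mult mult_le_one)
    then show ?thesis using absle gd_pos[of x] kern_nonneg[OF r0 r1, of x z] by simp
  qed
  have i2: "integrable lebesgue (\<lambda>z. u x * v z * (gauss_dens x * kern \<rho> x z))" for x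
    apply (rule Bochner_Integration.integrable_bound[OF Kint[of x]])
    subgoal by measurable
    using b by (intro AE_I2) (simp add: abs_of_nonneg[OF mult_nonneg_nonneg[OF less_imp_le[OF gd_pos] kern_nonneg[OF r0 r1]]])
  then show "AE x in lebesgue. integrable lebesgue (\<lambda>z. (\<lambda>(x,z). u x * v z * (gauss_dens x * kern \<rho> x z)) (x, z))"
    by simp
  show "integrable lebesgue (\<lambda>x. \<integral>z. norm ((\<lambda>(x,z). u x * v z * (gauss_dens x * kern \<rho> x z)) (x, z)) \<partial>lebesgue)"
  proof (rule Bochner_Integration.integrable_bound[OF gint])
    show "(\<lambda>x. \<integral>z. norm ((\<lambda>(x,z). u x * v z * (gauss_dens x * kern \<rho> x z)) (x, z)) \<partial>lebesgue) \<in> borel_measurable lebesgue"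
      by measurable
    show "AE x in lebesgue. norm (\<integral>z. norm ((\<lambda>(x,z). u x * v z * (gauss_dens x * kern \<rho> x z)) (x, z)) \<partial>lebesgue) \<le> norm (gauss_dens x)"
    proof (intro AE_I2)
      fix x
      have "(\<integral>z. \<bar>u x * v z * (gauss_dens x * kern \<rho> x z)\<bar> \<partial>lebesgue) \<le> (\<integral>z. gauss_dens x * kern \<rho> x z \<partial>lebesgue)"
        by (rule integral_mono[OF _ Kint b]) (use i2[of x] in auto)
      also have "\<dots> = gauss_dens x" using kern_one by simp
      finally have "(\<integral>z. \<bar>u x * v z * (gauss_dens x * kern \<rho> x z)\<bar> \<partial>lebesgue) \<le> gauss_dens x" .
      moreover have "(\<integral>z. \<bar>u x * v z * (gauss_dens x * kern \<rho> x z)\<bar> \<partial>lebesgue) \<ge> 0"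
        by (rule integral_nonneg_AE) auto
      ultimately show "norm (\<integral>z. norm ((\<lambda>(x,z). u x * v z * (gauss_dens x * kern \<rho> x z)) (x, z)) \<partial>lebesgue) \<le> norm (gauss_dens x)"
        using gd_pos[of x] by simp
    qed
  qed
qed

lemma ou_sym:
  fixes u v :: "'a \<Rightarrow> real"
  assumes [measurable]: "u \<in> borel_measurable lebesgue" "v \<in> borel_measurable lebesgue"
    and ub: "\<And>z. \<bar>u z\<bar> \<le> 1" and vb: "\<And>z. \<bar>v z\<bar> \<le> 1"
  shows "(\<integral>x. u x * ou_op \<rho> v x * gauss_dens x \<partial>lebesgue) = (\<integral>x. v x * ou_op \<rho> u x * gauss_dens x \<partial>lebesgue)"
proof -
  have "(\<integral>x. u x * ou_op \<rho> v x * gauss_dens x \<partial>lebesgue) =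
         (\<integral>x. (\<integral>z. u x * v z * (gauss_dens x * kern \<rho> x z) \<partial>lebesgue) \<partial>lebesgue)"
    by (rule step1) simp_all
  also have "\<dots> = (\<integral>z. (\<integral>x. u x * v z * (gauss_dens x * kern \<rho> x z) \<partial>lebesgue) \<partial>lebesgue)"
    using leb2.Fubini_integral[of "\<lambda>x z. u x * v z * (gauss_dens x * kern \<rho> x z)"] Fint[OF assms] by simp
  also have "\<dots> = (\<integral>z. (\<integral>x. v z * u x * (gauss_dens z * kern \<rho> z x) \<partial>lebesgue) \<partial>lebesgue)"
    by (simp add: K_sym ac_simps)
  also have "\<dots> = (\<integral>x. v x * ou_op \<rho> u x * gauss_dens x \<partial>lebesgue)"
    by (rule step1[symmetric]) simp_all
  finally show ?thesis .
qed


end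

context gctx
begin
lemma p1: "1 - \<rho>\<^sup>2 > 0" using r0 r1 by (simp add: power_less_one_iff abs_less_iff)

lemma expint: "integrable lebesgue (\<lambda>z::'a. exp (- (norm z)\<^sup>2 / (4 * (1 - \<rho>\<^sup>2))))"
proof -
  let ?s = "sqrt (1 - \<rho>\<^sup>2)"
  have s: "?s > 0" using s_pos[OF r0 r1] .
  let ?c = "1 / (sqrt 2 * ?s)"
  have c: "?c \<noteq> 0" using s by simp
  have "integrable lebesgue (\<lambda>y::'a. gauss_dens (0 + ?c *\<^sub>R y) :: real)"
    using sub_integral(2)[OF c, of "gauss_dens :: 'a \<Rightarrow> real" 0] gint by blast
  then have "integrable lebesgue (\<lambda>y::'a. gauss_dens (?c *\<^sub>R y) :: real)" by simp
  then have "integrable lebesgue (\<lambda>y::'a. (1 / cd TYPE('a)) * gauss_dens (?c *\<^sub>R y))" by (rule integrable_mult_right)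
  moreover have "(1 / cd TYPE('a)) * gauss_dens (?c *\<^sub>R y) = exp (- (norm y)\<^sup>2 / (4 * (1 - \<rho>\<^sup>2)))" for y :: 'a
  proof -
    have "(norm (?c *\<^sub>R y))\<^sup>2 / 2 = (norm y)\<^sup>2 / (4 * (1 - \<rho>\<^sup>2))"
    proof -
      have "(norm (?c *\<^sub>R y))\<^sup>2 = ?c\<^sup>2 * (norm y)\<^sup>2" by (simp only: norm_scaleR power_mult_distrib power2_abs)
      moreover have "?c\<^sup>2 = 1 / (2 * (1 - \<rho>\<^sup>2))" using p1 by (simp add: power_divide power_mult_distrib)
      ultimately show ?thesis by simp
    qed
    then have h: "- (norm (?c *\<^sub>R y))\<^sup>2 / 2 = - (norm y)\<^sup>2 / (4 * (1 - \<rho>\<^sup>2))"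
      by (simp only: minus_divide_left[symmetric])
    have "(1 / cd TYPE('a)) * gauss_dens (?c *\<^sub>R y) = exp (- (norm (?c *\<^sub>R y))\<^sup>2 / 2)"
      unfolding gd_eq[of "?c *\<^sub>R y"] using cd_pos[where 'a='a] by (simp only: mult.assoc[symmetric]) simp
    then show ?thesis by (simp only: h)
  qed
  ultimately show ?thesis by simp
qed

lemma sq2: "((a::real) + b)\<^sup>2 \<le> 2 * a\<^sup>2 + 2 * b\<^sup>2"
proof -
  have "0 \<le> (a - b)\<^sup>2" by simp
  then show ?thesis by (simp add: power2_eq_square algebra_simps)
qed

lemma aux_q: "(p::real) > 0 \<Longrightarrow> Z \<le> 2 * N + 2 * R2 \<Longrightarrow> - N / (2 * p) \<le> R2 / (2 * p) + - Z / (4 * p)"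
  by (simp add: field_simps)

lemma kern_dom:
  assumes "norm x \<le> R"
  shows "kern \<rho> x (z::'a) \<le> cd TYPE('a) / sqrt (1 - \<rho>\<^sup>2) ^ DIM('a) * exp (R\<^sup>2 / (2 * (1 - \<rho>\<^sup>2))) * exp (- (norm z)\<^sup>2 / (4 * (1 - \<rho>\<^sup>2)))"
proof -
  have p: "1 - \<rho>\<^sup>2 > 0" using r0 r1 by (simp add: power_less_one_iff abs_less_iff)
  have s: "sqrt (1 - \<rho>\<^sup>2) > 0" using s_pos[OF r0 r1] .
  have rx: "norm (\<rho> *\<^sub>R x) \<le> R" using assms r0 r1 by (simp add: mult_le_one order_trans[of _ "norm x"] mult_left_le_one_le)
  have "norm z \<le> norm (z - \<rho> *\<^sub>R x) + norm (\<rho> *\<^sub>R x)" by (metis norm_triangle_sub add.commute)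
  then have "(norm z)\<^sup>2 \<le> (norm (z - \<rho> *\<^sub>R x) + norm (\<rho> *\<^sub>R x))\<^sup>2" by (simp add: power_mono)
  also have "\<dots> \<le> 2 * (norm (z - \<rho> *\<^sub>R x))\<^sup>2 + 2 * (norm (\<rho> *\<^sub>R x))\<^sup>2"
    using sq2[of "norm (z - \<rho> *\<^sub>R x)" "norm (\<rho> *\<^sub>R x)"] .
  also have "\<dots> \<le> 2 * (norm (z - \<rho> *\<^sub>R x))\<^sup>2 + 2 * R\<^sup>2"
    using rx by (simp add: power_mono)
  finally have q: "- (norm (z - \<rho> *\<^sub>R x))\<^sup>2 / (2 * (1 - \<rho>\<^sup>2)) \<le> R\<^sup>2 / (2 * (1 - \<rho>\<^sup>2)) + - (norm z)\<^sup>2 / (4 * (1 - \<rho>\<^sup>2))"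
    using aux_q[OF p] by blast
  have "kern \<rho> x z = cd TYPE('a) / sqrt (1 - \<rho>\<^sup>2) ^ DIM('a) * exp (- (norm (z - \<rho> *\<^sub>R x))\<^sup>2 / (2 * (1 - \<rho>\<^sup>2)))"
    by (rule kern_eq[OF r0 r1])
  also have "\<dots> \<le> cd TYPE('a) / sqrt (1 - \<rho>\<^sup>2) ^ DIM('a) * exp (R\<^sup>2 / (2 * (1 - \<rho>\<^sup>2)) + - (norm z)\<^sup>2 / (4 * (1 - \<rho>\<^sup>2)))"
    using q cd_pos[where 'a='a] s by (intro mult_left_mono) auto
  also have "\<dots> = cd TYPE('a) / sqrt (1 - \<rho>\<^sup>2) ^ DIM('a) * exp (R\<^sup>2 / (2 * (1 - \<rho>\<^sup>2))) * exp (- (norm z)\<^sup>2 / (4 * (1 - \<rho>\<^sup>2)))"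
    by (simp only: exp_add mult.assoc)
  finally show ?thesis .
qed

lemma ou_cont:
  fixes w :: "'a \<Rightarrow> real"
  assumes [measurable]: "w \<in> borel_measurable lebesgue" and wb: "\<And>z. \<bar>w z\<bar> \<le> 1"
  shows "continuous (at a) (ou_op \<rho> w)"
proof (rule continuous_at_sequentiallyI)
  fix X assume X: "X \<longlonglongrightarrow> a"
  then have "Bseq X" using convergent_imp_Bseq convergentI by blast
  then obtain R where R: "R > 0" "\<And>n. norm (X n) \<le> R" by (auto elim: BseqE)
  let ?W = "\<lambda>z::'a. cd TYPE('a) / sqrt (1 - \<rho>\<^sup>2) ^ DIM('a) * exp (R\<^sup>2 / (2 * (1 - \<rho>\<^sup>2))) * exp (- (norm z)\<^sup>2 / (4 * (1 - \<rho>\<^sup>2)))"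
  have "(\<lambda>n. \<integral>z. w z * kern \<rho> (X n) z \<partial>lebesgue) \<longlonglongrightarrow> (\<integral>z. w z * kern \<rho> a z \<partial>lebesgue)"
  proof (rule integral_dominated_convergence[where w = ?W])
    show "(\<lambda>z. w z * kern \<rho> a z) \<in> borel_measurable lebesgue" by measurable
    show "\<And>n. (\<lambda>z. w z * kern \<rho> (X n) z) \<in> borel_measurable lebesgue" by measurable
    show "integrable lebesgue ?W" by (rule integrable_mult_right) (rule expint)
    show "AE z in lebesgue. (\<lambda>n. w z * kern \<rho> (X n) z) \<longlonglongrightarrow> w z * kern \<rho> a z"
      unfolding kern_eq[OF r0 r1] by (intro AE_I2 tendsto_intros X) (use p1 in auto)
    show "AE z in lebesgue. norm (w z * kern \<rho> (X n) z) \<le> ?W z" for n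
    proof (intro AE_I2)
      fix z
      have "norm (w z * kern \<rho> (X n) z) \<le> kern \<rho> (X n) z"
        using absle[OF wb[of z] kern_nonneg[OF r0 r1]] by simp
      also have "\<dots> \<le> ?W z" by (rule kern_dom[OF R(2)])
      finally show "norm (w z * kern \<rho> (X n) z) \<le> ?W z" .
    qed
  qed
  then show "(\<lambda>n. ou_op \<rho> w (X n)) \<longlonglongrightarrow> ou_op \<rho> w a"
    unfolding ou_kern[OF assms(1)] .
qed

lemma ou_small:
  fixes g :: "'a \<Rightarrow> real"
  assumes [measurable]: "g \<in> borel_measurable lebesgue" and gb: "\<And>z. \<bar>g z\<bar> \<le> 1"
    and supp: "\<And>z. norm z > R \<Longrightarrow> g z = 0"
  shows "\<bar>ou_op \<rho> g x\<bar> \<le> exp (R\<^sup>2 / 2) / sqrt (1 - \<rho>\<^sup>2) ^ DIM('a) * (\<integral>z. \<bar>g z\<bar> * gauss_dens z \<partial>lebesgue)"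
proof -
  let ?C = "exp (R\<^sup>2 / 2) / sqrt (1 - \<rho>\<^sup>2) ^ DIM('a)"
  have s: "sqrt (1 - \<rho>\<^sup>2) > 0" using s_pos[OF r0 r1] .
  have ig: "integrable lebesgue (\<lambda>z. \<bar>g z\<bar> * gauss_dens z)"
    apply (rule Bochner_Integration.integrable_bound[OF gint])
    subgoal by measurable
    using gb gd_pos by (intro AE_I2) (simp add: abs_mult mult_left_le_one_le less_imp_le)
  have pt: "\<bar>g z * kern \<rho> x z\<bar> \<le> ?C * (\<bar>g z\<bar> * gauss_dens z)" for z
  proof (cases "norm z > R")
    case True then show ?thesis using supp[OF True] gd_pos[of z] s by simp
  next
    case False
    have k1: "kern \<rho> x z \<le> cd TYPE('a) / sqrt (1 - \<rho>\<^sup>2) ^ DIM('a)"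
      unfolding kern_eq[OF r0 r1] using cd_pos[where 'a='a] s by (simp add: divide_le_cancel)
    have "(norm z)\<^sup>2 \<le> R\<^sup>2" using False norm_ge_zero[of z] by (intro power_mono) auto
    then have "0 \<le> R\<^sup>2 / 2 + - (norm z)\<^sup>2 / 2" by linarith
    then have "1 \<le> exp (R\<^sup>2 / 2 + - (norm z)\<^sup>2 / 2)" by (simp only: one_le_exp_iff)
    then have e: "1 \<le> exp (R\<^sup>2 / 2) * exp (- (norm z)\<^sup>2 / 2)" by (simp only: exp_add)
    have "cd TYPE('a) \<le> cd TYPE('a) * (exp (R\<^sup>2 / 2) * exp (- (norm z)\<^sup>2 / 2))"
      using mult_left_mono[OF e, of "cd TYPE('a)"] cd_pos[where 'a='a] by simp
    also have "\<dots> = exp (R\<^sup>2 / 2) * gauss_dens z" unfolding gd_eq by (simp add: ac_simps)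
    finally have "cd TYPE('a) \<le> exp (R\<^sup>2 / 2) * gauss_dens z" .
    then have "cd TYPE('a) / sqrt (1 - \<rho>\<^sup>2) ^ DIM('a) \<le> (exp (R\<^sup>2 / 2) * gauss_dens z) / sqrt (1 - \<rho>\<^sup>2) ^ DIM('a)"
      using s by (intro divide_right_mono) auto
    then have "kern \<rho> x z \<le> ?C * gauss_dens z"
      using k1 by simp
    then have k: "kern \<rho> x z \<le> ?C * gauss_dens z" .
    have "\<bar>g z * kern \<rho> x z\<bar> = \<bar>g z\<bar> * kern \<rho> x z" using kern_nonneg[OF r0 r1, of x z] by (simp add: abs_mult)
    also have "\<dots> \<le> \<bar>g z\<bar> * (?C * gauss_dens z)" using k by (intro mult_left_mono) auto
    also have "\<dots> = ?C * (\<bar>g z\<bar> * gauss_dens z)" by (simp add: ac_simps)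
    finally show ?thesis .
  qed
  have ik: "integrable lebesgue (\<lambda>z. g z * kern \<rho> x z)" using ou_int[OF assms(1) gb] by blast
  have "\<bar>ou_op \<rho> g x\<bar> \<le> (\<integral>z. ?C * (\<bar>g z\<bar> * gauss_dens z) \<partial>lebesgue)"
    unfolding ou_kern[OF assms(1)]
    by (rule integral_abs_bound_integral[OF ik _ pt]) (use ig in simp)
  then show ?thesis by simp
qed

end

definition qf :: "real \<Rightarrow> real" where "qf u = (max 0 u)\<^sup>2"

lemma qf_deriv: "(qf has_real_derivative 2 * max 0 u) (at u)"
proof -
  consider "u > 0" | "u < 0" | "u = 0" by linarith
  then show ?thesis
  proof cases
    case 1
    have "((\<lambda>v. v\<^sup>2) has_real_derivative 2 * max 0 u) (at u)"
      using 1 by (auto intro!: derivative_eq_intros)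
    then show ?thesis
      by (rule has_field_derivative_transform_within_open[where S="{0<..}"]) (use 1 in \<open>auto simp: qf_def\<close>)
  next
    case 2
    have "((\<lambda>v. 0) has_real_derivative 2 * max 0 u) (at u)"
      using 2 by (auto intro!: derivative_eq_intros)
    then show ?thesis
      by (rule has_field_derivative_transform_within_open[where S="{..<0}"]) (use 2 in \<open>auto simp: qf_def\<close>)
  next
    case 3
    have "((\<lambda>y. (qf y - qf 0) / (y - 0)) \<longlongrightarrow> 0) (at 0)"
    proof (rule Lim_null_comparison)
      show "\<forall>\<^sub>F y in at 0. norm ((qf y - qf 0) / (y - 0)) \<le> \<bar>y\<bar>"
        by (intro always_eventually allI) (auto simp: qf_def power2_eq_square abs_mult max_def)
      show "((\<lambda>y. \<bar>y\<bar>) \<longlongrightarrow> 0) (at (0::real))"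
        using tendsto_rabs[OF tendsto_ident_at[of "0::real" UNIV]] by simp
    qed
    then show ?thesis using 3 by (simp add: has_field_derivative_iff)
  qed
qed

definition Sf :: "real \<Rightarrow> real" where "Sf u = 2 * qf u - 4 * qf (u - 1/2) + 2 * qf (u - 1)"
definition Sd :: "real \<Rightarrow> real" where "Sd u = 4 * max 0 u - 8 * max 0 (u - 1/2) + 4 * max 0 (u - 1)"

lemma Sf_deriv: "(Sf has_real_derivative Sd u) (at u)"
  unfolding Sf_def[abs_def] Sd_def
  by (auto intro!: derivative_eq_intros DERIV_chain2[OF qf_deriv])

lemma Sd_cont: "continuous_on UNIV Sd"
  unfolding Sd_def[abs_def] by (intro continuous_intros)

lemma Sf_neg: "u \<le> 0 \<Longrightarrow> Sf u = 0"
  by (simp add: Sf_def qf_def max_def)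

lemma Sd_neg: "u \<le> 0 \<Longrightarrow> Sd u = 0"
  by (simp add: Sd_def max_def)

lemma Sf_one: "u \<ge> 1 \<Longrightarrow> Sf u = 1"
  by (simp add: Sf_def qf_def max_def power2_eq_square algebra_simps)

lemma Sf_bound: "0 \<le> Sf u \<and> Sf u \<le> 1"
proof -
  consider "u \<le> 0" | "0 \<le> u \<and> u \<le> 1/2" | "1/2 \<le> u \<and> u \<le> 1" | "u \<ge> 1" by linarith
  then show ?thesis
  proof cases
    case 2
    then have "Sf u = 2 * u\<^sup>2" by (simp add: Sf_def qf_def max_def)
    moreover have "u\<^sup>2 \<le> (1/2)\<^sup>2" using 2 by (intro power_mono) auto
    ultimately show ?thesis using 2 by (simp add: power2_eq_square)
  next
    case 3
    then have "Sf u = 1 - 2 * (1 - u)\<^sup>2" by (simp add: Sf_def qf_def max_def power2_eq_square algebra_simps)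
    moreover have "(1 - u)\<^sup>2 \<le> (1/2)\<^sup>2" using 3 by (intro power_mono) auto
    ultimately show ?thesis by (simp add: power2_eq_square)
  qed (simp_all add: Sf_neg Sf_one)
qed


definition bump :: "'a::euclidean_space \<Rightarrow> real \<Rightarrow> real \<Rightarrow> 'a \<Rightarrow> 'a \<Rightarrow> 'a" where
  "bump x r k e y = Sf (k * (r\<^sup>2 - (y - x) \<bullet> (y - x))) *\<^sub>R e"

definition bumpd :: "'a::euclidean_space \<Rightarrow> real \<Rightarrow> real \<Rightarrow> 'a \<Rightarrow> 'a \<Rightarrow> 'a \<Rightarrow>\<^sub>L 'a" where
  "bumpd x r k e y = (Sd (k * (r\<^sup>2 - (y - x) \<bullet> (y - x))) * k * -2) *\<^sub>R (blinfun_scaleR_left e o\<^sub>L blinfun_inner_left (y - x))"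

lemma bump_deriv: "(bump x r k e has_derivative blinfun_apply (bumpd x r k e y)) (at y)"
proof -
  let ?a = "\<lambda>y. k * (r\<^sup>2 - (y - x) \<bullet> (y - x))"
  have da: "(?a has_derivative (\<lambda>v. k * (- ((y - x) \<bullet> v + v \<bullet> (y - x))))) (at y)"
    by (auto intro!: derivative_eq_intros)
  have dS: "(Sf has_derivative (\<lambda>t. Sd (?a y) * t)) (at (?a y))"
    using Sf_deriv[of "?a y"] unfolding has_field_derivative_def by simp
  have "((\<lambda>y. Sf (?a y)) has_derivative (\<lambda>v. Sd (?a y) * (k * (- ((y - x) \<bullet> v + v \<bullet> (y - x)))))) (at y)"
    using has_derivative_compose[OF da dS] by simp
  then have "((\<lambda>y. Sf (?a y) *\<^sub>R e) has_derivative (\<lambda>v. (Sd (?a y) * (k * (- ((y - x) \<bullet> v + v \<bullet> (y - x))))) *\<^sub>R e)) (at y)"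
    by (rule has_derivative_scaleR_left)
  then show ?thesis unfolding bump_def[abs_def]
    by (rule has_derivative_eq_rhs) (auto simp: bumpd_def inner_commute algebra_simps fun_eq_iff blinfun.bilinear_simps)
qed

lemma bumpd_cont: "continuous_on UNIV (bumpd x r k e)"
  unfolding bumpd_def[abs_def]
  apply (intro continuous_intros continuous_on_compose2[OF Sd_cont]
      bounded_bilinear.continuous_on[OF bounded_bilinear_blinfun_compose]
      bounded_linear.continuous_on[OF bounded_linear_blinfun_inner_left])
  by auto

lemma bump_zero: "k \<ge> 0 \<Longrightarrow> dist y x \<ge> r \<Longrightarrow> r \<ge> 0 \<Longrightarrow> bump x r k e y = 0 \<and> bumpd x r k e y = 0"
proof -
  assume k: "k \<ge> 0" and d: "dist y x \<ge> r" and r: "r \<ge> 0"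
  have "r\<^sup>2 \<le> (dist y x)\<^sup>2" using d r by (intro power_mono) auto
  also have "\<dots> = (y - x) \<bullet> (y - x)" by (simp add: dist_norm power2_norm_eq_inner)
  finally have "k * (r\<^sup>2 - (y - x) \<bullet> (y - x)) \<le> 0" using k by (simp add: mult_nonneg_nonpos)
  then show ?thesis by (simp add: bump_def bumpd_def Sf_neg Sd_neg)
qed

lemma bump_C1c: "k \<ge> 0 \<Longrightarrow> r \<ge> 0 \<Longrightarrow> C1c_field (bump x r k e) (bumpd x r k e)"
  unfolding C1c_field_def
proof (intro conjI allI bump_deriv bumpd_cont)
  assume k: "k \<ge> 0" and r: "r \<ge> 0"
  have "{y. bump x r k e y \<noteq> 0} \<subseteq> cball x r"
    using bump_zero[OF k _ r] by (force simp: dist_commute)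
  then have "closure {y. bump x r k e y \<noteq> 0} \<subseteq> cball x r"
    by (intro closure_minimal) auto
  then show "compact (closure {y. bump x r k e y \<noteq> 0})"
    by (meson bounded_cball bounded_subset closed_closure compact_eq_bounded_closed)
qed

lemma bump_bound: "norm (bump x r k e y) \<le> norm e"
  using Sf_bound[of "k * (r\<^sup>2 - (y - x) \<bullet> (y - x))"] by (simp add: bump_def mult_left_le_one_le)

lemma bump_lim: "r > 0 \<Longrightarrow> (\<lambda>n. bump x r (real n) e y) \<longlonglongrightarrow> indicator (ball x r) y *\<^sub>R e"
proof (cases "y \<in> ball x r")
  case True
  assume r: "r > 0"
  have "(y - x) \<bullet> (y - x) = (dist y x)\<^sup>2" by (simp add: dist_norm power2_norm_eq_inner)
  then have "(y - x) \<bullet> (y - x) = (dist x y)\<^sup>2" by (simp add: dist_commute)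
  moreover have "(dist x y)\<^sup>2 < r\<^sup>2" using True by (intro power_strict_mono) auto
  ultimately have pos: "r\<^sup>2 - (y - x) \<bullet> (y - x) > 0" by simp
  obtain N :: nat where N: "real N > 1 / (r\<^sup>2 - (y - x) \<bullet> (y - x))" using reals_Archimedean2 by blast
  have "eventually (\<lambda>n. bump x r (real n) e y = e) sequentially"
  proof (rule eventually_sequentiallyI[of N])
    fix n assume "N \<le> n"
    then have "real n > 1 / (r\<^sup>2 - (y - x) \<bullet> (y - x))" using N by linarith
    then have "real n * (r\<^sup>2 - (y - x) \<bullet> (y - x)) \<ge> 1" using pos by (simp add: field_simps)
    then show "bump x r (real n) e y = e" by (simp add: bump_def Sf_one)
  qed
  then show ?thesis using True by (simp add: tendsto_eventually)
next
  case False
  assume r: "r > 0"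
  then have "bump x r (real n) e y = 0" for n using bump_zero[where k="real n" and y=y and x=x and r=r and e=e] False by (simp add: dist_commute)
  then show ?thesis using False by simp
qed


lemma bump_cont: "continuous_on UNIV (bump x r k e)"
  by (intro continuous_at_imp_continuous_on ballI has_derivative_continuous[OF bump_deriv])

lemma rb_pos:
  fixes \<Omega> :: "'a::euclidean_space set"
  assumes x: "x \<in> reduced_boundary \<Omega>" and eps: "\<epsilon> > 0"
  shows "\<Omega> \<inter> ball x \<epsilon> \<notin> null_sets lebesgue"
proof
  assume null: "\<Omega> \<inter> ball x \<epsilon> \<in> null_sets lebesgue"
  from x obtain \<mu> \<sigma> N where gr: "gradient_rep \<Omega> \<mu> \<sigma>" and N: "norm N = 1"
    and lim: "((\<lambda>r. - ((1 / measure \<mu> (ball x r)) *\<^sub>R (\<integral>y. indicator (ball x r) y *\<^sub>R \<sigma> y \<partial>\<mu>))) \<longlongrightarrow> N) (at_right 0)"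
    unfolding reduced_boundary_def by blast
  from gr have sets: "sets \<mu> = sets borel" and fin: "\<And>K. compact K \<Longrightarrow> emeasure \<mu> K < \<infinity>"
    and sm[measurable]: "\<sigma> \<in> borel_measurable \<mu>" and ae: "AE y in \<mu>. norm (\<sigma> y) = 1"
    and ibp: "\<And>\<phi> \<phi>'. C1c_field \<phi> \<phi>' \<Longrightarrow> (\<integral>y. \<phi> y \<bullet> \<sigma> y \<partial>\<mu>) = - (\<integral>y. indicator \<Omega> y * divergence \<phi>' y \<partial>lebesgue)"
    unfolding gradient_rep_def by blast+
  have mb: "f \<in> borel_measurable borel \<Longrightarrow> f \<in> borel_measurable \<mu>" for f :: "'a \<Rightarrow> 'a"
    using measurable_cong_sets[OF sets refl, where N="borel :: 'a measure"] by simp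
  have zero: "(\<integral>y. indicator (ball x r) y *\<^sub>R \<sigma> y \<partial>\<mu>) = 0" if r: "0 < r" "r < \<epsilon>" for r
  proof (rule euclidean_eqI)
    fix e :: 'a assume e: "e \<in> Basis"
    have [measurable]: "ball x r \<in> sets \<mu>" "cball x r \<in> sets \<mu>" using sets by auto
    have icb: "integrable \<mu> (indicator (cball x r) :: 'a \<Rightarrow> real)"
      using fin[of "cball x r"] by (intro integrable_real_indicator) auto
    have int_ball: "integrable \<mu> (\<lambda>y. indicator (ball x r) y *\<^sub>R \<sigma> y)"
    proof (rule Bochner_Integration.integrable_bound[OF icb])
      show "(\<lambda>y. indicator (ball x r) y *\<^sub>R \<sigma> y) \<in> borel_measurable \<mu>" by measurable
      show "AE y in \<mu>. norm (indicator (ball x r) y *\<^sub>R \<sigma> y) \<le> norm (indicator (cball x r) y :: real)"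
        using ae by eventually_elim (auto simp: indicator_def)
    qed
    have bm[measurable]: "bump x r (real n) e \<in> borel_measurable \<mu>" for n
      by (intro mb borel_measurable_continuous_onI bump_cont)
    have each: "(\<integral>y. bump x r (real n) e y \<bullet> \<sigma> y \<partial>\<mu>) = 0" for n
    proof -
      have "(\<integral>y. bump x r (real n) e y \<bullet> \<sigma> y \<partial>\<mu>) = - (\<integral>y. indicator \<Omega> y * divergence (bumpd x r (real n) e) y \<partial>lebesgue)"
        using r by (intro ibp bump_C1c) auto
      also have "(\<integral>y. indicator \<Omega> y * divergence (bumpd x r (real n) e) y \<partial>lebesgue) = 0"
      proof (rule integral_eq_zero_AE, rule AE_I'[OF null], safe)
        fix y assume "indicator \<Omega> y * divergence (bumpd x r (real n) e) y \<noteq> 0"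
        then have yO: "y \<in> \<Omega>" and dv: "divergence (bumpd x r (real n) e) y \<noteq> 0"
          by (auto simp: indicator_def split: if_splits)
        show "y \<in> \<Omega>" by fact
        show "y \<in> ball x \<epsilon>"
        proof (rule ccontr)
          assume "y \<notin> ball x \<epsilon>"
          then have "dist y x \<ge> r" using r by (auto simp: dist_commute)
          then have "bumpd x r (real n) e y = 0" using bump_zero[where k="real n" and y=y and x=x and r=r and e=e] r by simp
          then show False using dv by (simp add: divergence_def)
        qed
      qed
      finally show ?thesis by simp
    qed
    have conv: "(\<lambda>n. \<integral>y. bump x r (real n) e y \<bullet> \<sigma> y \<partial>\<mu>) \<longlonglongrightarrow> (\<integral>y. (indicator (ball x r) y *\<^sub>R e) \<bullet> \<sigma> y \<partial>\<mu>)"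
    proof (rule integral_dominated_convergence[where w="indicator (cball x r)"])
      show "(\<lambda>y. (indicator (ball x r) y *\<^sub>R e) \<bullet> \<sigma> y) \<in> borel_measurable \<mu>" by measurable
      show "(\<lambda>y. bump x r (real n) e y \<bullet> \<sigma> y) \<in> borel_measurable \<mu>" for n by measurable
      show "integrable \<mu> (indicator (cball x r) :: 'a \<Rightarrow> real)" by (rule icb)
      show "AE y in \<mu>. (\<lambda>n. bump x r (real n) e y \<bullet> \<sigma> y) \<longlonglongrightarrow> (indicator (ball x r) y *\<^sub>R e) \<bullet> \<sigma> y"
        using r by (intro AE_I2 tendsto_inner bump_lim tendsto_const) auto
      show "AE y in \<mu>. norm (bump x r (real n) e y \<bullet> \<sigma> y) \<le> indicator (cball x r) y" for n
        using ae
      proof eventually_elim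
        case (elim y)
        show ?case
        proof (cases "y \<in> cball x r")
          case True
          have "norm (bump x r (real n) e y \<bullet> \<sigma> y) \<le> norm (bump x r (real n) e y) * norm (\<sigma> y)"
            using Cauchy_Schwarz_ineq2 by simp
          also have "\<dots> \<le> norm e" using elim bump_bound[of x r "real n" e y] by simp
          finally show ?thesis using True e by simp
        next
          case False
          then have "dist y x \<ge> r" by (auto simp: dist_commute)
          then have "bump x r (real n) e y = 0" using bump_zero[where k="real n" and y=y and x=x and r=r and e=e] r by simp
          then show ?thesis by simp
        qed
      qed
    qed
    then have "(\<integral>y. (indicator (ball x r) y *\<^sub>R e) \<bullet> \<sigma> y \<partial>\<mu>) = 0"
      unfolding each using LIMSEQ_unique tendsto_const by blast
    moreover have "(\<integral>y. indicator (ball x r) y *\<^sub>R \<sigma> y \<partial>\<mu>) \<bullet> e = (\<integral>y. (indicator (ball x r) y *\<^sub>R e) \<bullet> \<sigma> y \<partial>\<mu>)"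
      using integral_inner_left[of e \<mu> "\<lambda>y. indicator (ball x r) y *\<^sub>R \<sigma> y"] int_ball
      by (simp add: inner_commute)
    ultimately show "(\<integral>y. indicator (ball x r) y *\<^sub>R \<sigma> y \<partial>\<mu>) \<bullet> e = 0 \<bullet> e" by simp
  qed
  have "((\<lambda>r. - ((1 / measure \<mu> (ball x r)) *\<^sub>R (\<integral>y. indicator (ball x r) y *\<^sub>R \<sigma> y \<partial>\<mu>))) \<longlongrightarrow> 0) (at_right 0)"
  proof (rule tendsto_eventually)
    show "\<forall>\<^sub>F r in at_right 0. - ((1 / measure \<mu> (ball x r)) *\<^sub>R (\<integral>y. indicator (ball x r) y *\<^sub>R \<sigma> y \<partial>\<mu>)) = 0"
      using eventually_at_right_real[OF eps] by eventually_elim (simp add: zero)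
  qed
  with lim have "N = 0" using tendsto_unique trivial_limit_at_right_real by blast
  with N show False by simp
qed

lemma gd_nonneg[simp]: "0 \<le> gauss_dens x"
  using gd_pos less_imp_le by blast

lemma gd_ne0[simp]: "gauss_dens x \<noteq> 0"
  using gd_pos by (metis less_irrefl)

lemma gm_cont:
  fixes S :: "'a::euclidean_space set"
  assumes S[measurable]: "S \<in> sets lebesgue" and gint: "integrable lebesgue (gauss_dens :: 'a \<Rightarrow> real)"
  shows "continuous_on UNIV (\<lambda>\<epsilon>. gauss_measure (S \<inter> ball x \<epsilon>))"
proof (intro continuous_at_imp_continuous_on ballI continuous_at_sequentiallyI)
  fix e0 :: real and X assume X: "X \<longlonglongrightarrow> e0"
  have [measurable]: "ball x \<epsilon> \<in> sets lebesgue" for \<epsilon> by simp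
  have "(\<lambda>n. \<integral>y. indicator (S \<inter> ball x (X n)) y * gauss_dens y \<partial>lebesgue) \<longlonglongrightarrow> (\<integral>y. indicator (S \<inter> ball x e0) y * gauss_dens y \<partial>lebesgue)"
  proof (rule integral_dominated_convergence[where w=gauss_dens])
    show "(\<lambda>y. indicator (S \<inter> ball x e0) y * gauss_dens y) \<in> borel_measurable lebesgue" by measurable
    show "(\<lambda>y. indicator (S \<inter> ball x (X n)) y * gauss_dens y) \<in> borel_measurable lebesgue" for n by measurable
    show "integrable lebesgue (gauss_dens :: 'a \<Rightarrow> real)" by (rule gint)
    show "AE y in lebesgue. norm (indicator (S \<inter> ball x (X n)) y * gauss_dens y) \<le> gauss_dens y" for n
      using gd_pos by (intro AE_I2) (auto simp: indicator_def less_imp_le)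
    have null: "sphere x e0 \<in> null_sets lebesgue" using negligible_sphere negligible_iff_null_sets by blast
    show "AE y in lebesgue. (\<lambda>n. indicator (S \<inter> ball x (X n)) y * gauss_dens y) \<longlonglongrightarrow> indicator (S \<inter> ball x e0) y * gauss_dens y"
    proof (rule AE_I'[OF null], safe)
      fix y assume nc: "\<not> (\<lambda>n. indicator (S \<inter> ball x (X n)) y * gauss_dens y) \<longlonglongrightarrow> indicator (S \<inter> ball x e0) y * gauss_dens y"
      show "y \<in> sphere x e0"
      proof (rule ccontr)
        assume "y \<notin> sphere x e0"
        then consider "dist x y < e0" | "dist x y > e0"
          using linorder_neqE_linordered_idom[of "dist x y" e0] by (auto simp: sphere_def)
        then have "eventually (\<lambda>n. indicator (S \<inter> ball x (X n)) y * gauss_dens y = indicator (S \<inter> ball x e0) y * gauss_dens y) sequentially"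
        proof cases
          case 1
          show ?thesis using order_tendstoD(1)[OF X 1] by eventually_elim (use 1 in \<open>auto simp: indicator_def\<close>)
        next
          case 2
          show ?thesis using order_tendstoD(2)[OF X 2] by eventually_elim (use 2 in \<open>auto simp: indicator_def\<close>)
        qed
        then have "(\<lambda>n. indicator (S \<inter> ball x (X n)) y * gauss_dens y) \<longlonglongrightarrow> indicator (S \<inter> ball x e0) y * gauss_dens y"
          by (rule tendsto_eventually)
        with nc show False by blast
      qed
    qed
  qed
  then show "(\<lambda>n. gauss_measure (S \<inter> ball x (X n))) \<longlonglongrightarrow> gauss_measure (S \<inter> ball x e0)"
    unfolding gauss_measure_def .
qed

lemma gm_ivt:
  fixes S :: "'a::euclidean_space set"
  assumes S: "S \<in> sets lebesgue" and gint: "integrable lebesgue (gauss_dens :: 'a \<Rightarrow> real)"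
    and r: "r \<ge> 0" and t: "0 \<le> t" "t \<le> gauss_measure (S \<inter> ball x r)"
  shows "\<exists>\<epsilon>. 0 \<le> \<epsilon> \<and> \<epsilon> \<le> r \<and> gauss_measure (S \<inter> ball x \<epsilon>) = t"
proof -
  have "gauss_measure (S \<inter> ball x 0) = 0" by (simp add: gauss_measure_def)
  then show ?thesis
    using IVT'[of "\<lambda>\<epsilon>. gauss_measure (S \<inter> ball x \<epsilon>)" 0 t r] t r
      continuous_on_subset[OF gm_cont[OF S gint, of x]] by auto
qed

lemma gm_pos:
  fixes A :: "'a::euclidean_space set"
  assumes A[measurable]: "A \<in> sets lebesgue" and nn: "A \<notin> null_sets lebesgue"
    and gint: "integrable lebesgue (gauss_dens :: 'a \<Rightarrow> real)"
  shows "gauss_measure A > 0"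
proof -
  have i: "integrable lebesgue (\<lambda>y. indicator A y * gauss_dens y :: real)"
    apply (rule Bochner_Integration.integrable_bound[OF gint])
    subgoal by measurable
    using gd_pos by (intro AE_I2) (auto simp: indicator_def less_imp_le)
  have ge: "gauss_measure A \<ge> 0" unfolding gauss_measure_def
    using gd_pos by (intro integral_nonneg_AE AE_I2) (auto simp: less_imp_le indicator_def)
  show ?thesis
  proof (rule ccontr)
    assume "\<not> gauss_measure A > 0"
    then have "gauss_measure A = 0" using ge by simp
    then have "AE y in lebesgue. indicator A y * gauss_dens y = 0"
      unfolding gauss_measure_def using integral_nonneg_eq_0_iff_AE[OF i] gd_pos
      by (auto simp: less_imp_le)
    then have "AE y in lebesgue. y \<notin> A" by eventually_elim (auto simp: indicator_def)
    then have "A \<in> null_sets lebesgue" using AE_iff_null_sets[OF A] by blast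
    with nn show False by blast
  qed
qed

context gctx
begin

lemma ou_meas[measurable]:
  fixes w :: "'a \<Rightarrow> real"
  assumes "w \<in> borel_measurable lebesgue" "\<And>z. \<bar>w z\<bar> \<le> 1"
  shows "ou_op \<rho> w \<in> borel_measurable lebesgue"
  by (intro borel_leb borel_measurable_continuous_onI continuous_at_imp_continuous_on ballI ou_cont assms)

lemma int3:
  fixes u v :: "'a \<Rightarrow> real"
  assumes [measurable]: "u \<in> borel_measurable lebesgue" "v \<in> borel_measurable lebesgue"
    and ub: "\<And>z. \<bar>u z\<bar> \<le> 1" and vb: "\<And>z. \<bar>v z\<bar> \<le> 1"
  shows "integrable lebesgue (\<lambda>x. u x * ou_op \<rho> v x * gauss_dens x)"
proof (rule Bochner_Integration.integrable_bound[OF gint])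
  have [measurable]: "ou_op \<rho> v \<in> borel_measurable lebesgue" using ou_meas assms by blast
  show "(\<lambda>x. u x * ou_op \<rho> v x * gauss_dens x) \<in> borel_measurable lebesgue" by measurable
  show "AE x in lebesgue. norm (u x * ou_op \<rho> v x * gauss_dens x) \<le> norm (gauss_dens x)"
  proof (intro AE_I2)
    fix x
    have "\<bar>u x * ou_op \<rho> v x\<bar> \<le> 1" using ub[of x] ou_int(2)[OF assms(2) vb, of x]
      by (simp add: abs_mult mult_le_one)
    then show "norm (u x * ou_op \<rho> v x * gauss_dens x) \<le> norm (gauss_dens x)"
      using gd_pos[of x] by (simp add: abs_mult mult_left_le_one_le)
  qed
qed

lemma expand:
  fixes u g :: "'a \<Rightarrow> real"
  assumes [measurable]: "u \<in> borel_measurable lebesgue" "g \<in> borel_measurable lebesgue"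
    and ub: "\<And>z. \<bar>u z\<bar> \<le> 1" and gb: "\<And>z. \<bar>g z\<bar> \<le> 1"
  shows "(\<integral>x. (u x + g x) * ou_op \<rho> (\<lambda>z. u z + g z) x * gauss_dens x \<partial>lebesgue) =
           (\<integral>x. u x * ou_op \<rho> u x * gauss_dens x \<partial>lebesgue) + 2 * (\<integral>x. g x * ou_op \<rho> u x * gauss_dens x \<partial>lebesgue)
           + (\<integral>x. g x * ou_op \<rho> g x * gauss_dens x \<partial>lebesgue)"
    and "(\<integral>x. (u x - g x) * ou_op \<rho> (\<lambda>z. u z - g z) x * gauss_dens x \<partial>lebesgue) =
           (\<integral>x. u x * ou_op \<rho> u x * gauss_dens x \<partial>lebesgue) - 2 * (\<integral>x. g x * ou_op \<rho> u x * gauss_dens x \<partial>lebesgue)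
           + (\<integral>x. g x * ou_op \<rho> g x * gauss_dens x \<partial>lebesgue)"
proof -
  have i1: "integrable lebesgue (\<lambda>x. u x * ou_op \<rho> u x * gauss_dens x)" by (rule int3) (use assms in auto)
  have i2: "integrable lebesgue (\<lambda>x. u x * ou_op \<rho> g x * gauss_dens x)" by (rule int3) (use assms in auto)
  have i3: "integrable lebesgue (\<lambda>x. g x * ou_op \<rho> u x * gauss_dens x)" by (rule int3) (use assms in auto)
  have i4: "integrable lebesgue (\<lambda>x. g x * ou_op \<rho> g x * gauss_dens x)" by (rule int3) (use assms in auto)
  have sym: "(\<integral>x. u x * ou_op \<rho> g x * gauss_dens x \<partial>lebesgue) = (\<integral>x. g x * ou_op \<rho> u x * gauss_dens x \<partial>lebesgue)"
    by (rule ou_sym) (use assms in auto)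
  have "(\<integral>x. (u x + g x) * ou_op \<rho> (\<lambda>z. u z + g z) x * gauss_dens x \<partial>lebesgue) =
        (\<integral>x. (u x * ou_op \<rho> u x * gauss_dens x + u x * ou_op \<rho> g x * gauss_dens x) +
            (g x * ou_op \<rho> u x * gauss_dens x + g x * ou_op \<rho> g x * gauss_dens x) \<partial>lebesgue)"
    by (rule Bochner_Integration.integral_cong[OF refl]) (simp only: ou_add(1)[OF assms], simp add: algebra_simps)
  also have "\<dots> = (\<integral>x. u x * ou_op \<rho> u x * gauss_dens x \<partial>lebesgue) + (\<integral>x. u x * ou_op \<rho> g x * gauss_dens x \<partial>lebesgue)
     + ((\<integral>x. g x * ou_op \<rho> u x * gauss_dens x \<partial>lebesgue) + (\<integral>x. g x * ou_op \<rho> g x * gauss_dens x \<partial>lebesgue))"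
    using i1 i2 i3 i4 by simp
  finally show "(\<integral>x. (u x + g x) * ou_op \<rho> (\<lambda>z. u z + g z) x * gauss_dens x \<partial>lebesgue) =
           (\<integral>x. u x * ou_op \<rho> u x * gauss_dens x \<partial>lebesgue) + 2 * (\<integral>x. g x * ou_op \<rho> u x * gauss_dens x \<partial>lebesgue)
           + (\<integral>x. g x * ou_op \<rho> g x * gauss_dens x \<partial>lebesgue)" using sym by simp
  have "(\<integral>x. (u x - g x) * ou_op \<rho> (\<lambda>z. u z - g z) x * gauss_dens x \<partial>lebesgue) =
        (\<integral>x. (u x * ou_op \<rho> u x * gauss_dens x - u x * ou_op \<rho> g x * gauss_dens x) -
            (g x * ou_op \<rho> u x * gauss_dens x - g x * ou_op \<rho> g x * gauss_dens x) \<partial>lebesgue)"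
    by (rule Bochner_Integration.integral_cong[OF refl]) (simp only: ou_add(2)[OF assms], simp add: algebra_simps)
  also have "\<dots> = (\<integral>x. u x * ou_op \<rho> u x * gauss_dens x \<partial>lebesgue) - (\<integral>x. u x * ou_op \<rho> g x * gauss_dens x \<partial>lebesgue)
     - ((\<integral>x. g x * ou_op \<rho> u x * gauss_dens x \<partial>lebesgue) - (\<integral>x. g x * ou_op \<rho> g x * gauss_dens x \<partial>lebesgue))"
    using i1 i2 i3 i4 by simp
  finally show "(\<integral>x. (u x - g x) * ou_op \<rho> (\<lambda>z. u z - g z) x * gauss_dens x \<partial>lebesgue) =
           (\<integral>x. u x * ou_op \<rho> u x * gauss_dens x \<partial>lebesgue) - 2 * (\<integral>x. g x * ou_op \<rho> u x * gauss_dens x \<partial>lebesgue)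
           + (\<integral>x. g x * ou_op \<rho> g x * gauss_dens x \<partial>lebesgue)" using sym by simp
qed

end

context gctx
begin

lemma ind_int:
  assumes [measurable]: "(S :: 'a set) \<in> sets lebesgue"
  shows "integrable lebesgue (\<lambda>y. indicator S y * gauss_dens y :: real)"
  apply (rule Bochner_Integration.integrable_bound[OF gint])
  subgoal by measurable
  by (intro AE_I2) (auto simp: indicator_def)

lemma swap:
  fixes \<Omega> :: "nat \<Rightarrow> 'a set" and a :: "nat \<Rightarrow> real"
  assumes part: "is_partition m \<Omega>" and meas: "\<forall>k<m. gauss_measure (\<Omega> k) = a k"
    and maxi: "\<forall>\<Theta> :: nat \<Rightarrow> 'a set. is_partition m \<Theta> \<and> (\<forall>k<m. gauss_measure (\<Theta> k) = a k) \<longrightarrow> noise_stab \<rho> m \<Theta> \<le> noise_stab \<rho> m \<Omega>"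
    and ij: "i < m" "j < m" "i \<noteq> j"
    and x1: "x1 \<in> reduced_boundary (\<Omega> j)" and x2: "x2 \<in> reduced_boundary (\<Omega> i)"
  shows "ou_op \<rho> (\<lambda>y. indicator (\<Omega> i) y - indicator (\<Omega> j) y) x1 \<le> ou_op \<rho> (\<lambda>y. indicator (\<Omega> i) y - indicator (\<Omega> j) y) x2"
proof (rule ccontr)
  define h where "h = (\<lambda>y. indicator (\<Omega> i) y - indicator (\<Omega> j) y :: real)"
  define f where "f = ou_op \<rho> h"
  assume "\<not> ou_op \<rho> (\<lambda>y. indicator (\<Omega> i) y - indicator (\<Omega> j) y) x1 \<le> ou_op \<rho> (\<lambda>y. indicator (\<Omega> i) y - indicator (\<Omega> j) y) x2"
  then have lt: "f x2 < f x1" unfolding f_def h_def by simp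
  have Om: "\<And>k. k < m \<Longrightarrow> \<Omega> k \<in> sets lebesgue"
    and Od: "\<And>k l. k < m \<Longrightarrow> l < m \<Longrightarrow> k \<noteq> l \<Longrightarrow> \<Omega> k \<inter> \<Omega> l = {}"
    and Ou: "(\<Union>k<m. \<Omega> k) = UNIV"
    using part unfolding is_partition_def by auto
  have Oi[measurable]: "\<Omega> i \<in> sets lebesgue" and Oj[measurable]: "\<Omega> j \<in> sets lebesgue" using Om ij by auto
  have dij: "\<Omega> i \<inter> \<Omega> j = {}" using Od ij by auto
  have hm[measurable]: "h \<in> borel_measurable lebesgue" unfolding h_def by measurable
  have hb: "\<bar>h z\<bar> \<le> 1" for z unfolding h_def by (auto simp: indicator_def)
  define \<delta> where "\<delta> = (f x1 - f x2) / 3"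
  have \<delta>: "\<delta> > 0" using lt unfolding \<delta>_def by simp
  have fc: "continuous (at y) f" for y unfolding f_def by (rule ou_cont[OF hm hb])
  obtain d1 where d1: "d1 > 0" "\<forall>y. dist y x1 < d1 \<longrightarrow> dist (f y) (f x1) < \<delta>"
    using fc[of x1] \<delta> unfolding continuous_at_eps_delta by blast
  obtain d2 where d2: "d2 > 0" "\<forall>y. dist y x2 < d2 \<longrightarrow> dist (f y) (f x2) < \<delta>"
    using fc[of x2] \<delta> unfolding continuous_at_eps_delta by blast
  define r where "r = min d1 d2"
  have r: "r > 0" using d1 d2 by (simp add: r_def)
  have fA: "f y \<ge> f x1 - \<delta>" if "dist y x1 < r" for y
    using d1(2) that by (auto simp: dist_real_def r_def)
  have fB: "f y \<le> f x2 + \<delta>" if "dist y x2 < r" for y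
    using d2(2) that by (auto simp: dist_real_def r_def)
  have pA: "gauss_measure (\<Omega> j \<inter> ball x1 r) > 0"
    by (rule gm_pos) (use rb_pos[OF x1 r] gint in auto)
  have pB: "gauss_measure (\<Omega> i \<inter> ball x2 r) > 0"
    by (rule gm_pos) (use rb_pos[OF x2 r] gint in auto)
  define R where "R = norm x1 + norm x2 + r"
  define C where "C = exp (R\<^sup>2 / 2) / sqrt (1 - \<rho>\<^sup>2) ^ DIM('a)"
  have C: "C > 0" unfolding C_def using s_pos[OF r0 r1] by simp
  define t where "t = min (min (gauss_measure (\<Omega> j \<inter> ball x1 r)) (gauss_measure (\<Omega> i \<inter> ball x2 r))) (\<delta> / (8 * C))"
  have t: "t > 0" "t \<le> gauss_measure (\<Omega> j \<inter> ball x1 r)" "t \<le> gauss_measure (\<Omega> i \<inter> ball x2 r)"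
    using pA pB \<delta> C unfolding t_def by auto
  have "t \<le> \<delta> / (8 * C)" unfolding t_def by simp
  then have "8 * C * t \<le> 8 * C * (\<delta> / (8 * C))" using C by (intro mult_left_mono) auto
  also have "\<dots> = \<delta>" using C by simp
  finally have t8: "8 * C * t \<le> \<delta>" .
  obtain eA where eA: "0 \<le> eA" "eA \<le> r" "gauss_measure (\<Omega> j \<inter> ball x1 eA) = t"
    using gm_ivt[OF Oj gint, of r t x1] r t by auto
  obtain eB where eB: "0 \<le> eB" "eB \<le> r" "gauss_measure (\<Omega> i \<inter> ball x2 eB) = t"
    using gm_ivt[OF Oi gint, of r t x2] r t by auto
  define A where "A = \<Omega> j \<inter> ball x1 eA"
  define B where "B = \<Omega> i \<inter> ball x2 eB"
  have Am[measurable]: "A \<in> sets lebesgue" and Bm[measurable]: "B \<in> sets lebesgue" unfolding A_def B_def by auto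
  have AO: "A \<subseteq> \<Omega> j" and BO: "B \<subseteq> \<Omega> i" unfolding A_def B_def by auto
  have AB: "A \<inter> B = {}" using AO BO dij by auto
  have AB': "y \<in> A \<Longrightarrow> y \<notin> B" for y using AB by auto
  have Ar: "dist y x1 < r" if "y \<in> A" for y using that eA unfolding A_def by (auto simp: dist_commute)
  have Br: "dist y x2 < r" if "y \<in> B" for y using that eB unfolding B_def by (auto simp: dist_commute)
  have gA: "gauss_measure A = t" and gB: "gauss_measure B = t" using eA eB unfolding A_def B_def by auto
  define g where "g = (\<lambda>y. indicator A y - indicator B y :: real)"
  have gm[measurable]: "g \<in> borel_measurable lebesgue" unfolding g_def by measurable
  have gb: "\<bar>g z\<bar> \<le> 1" for z unfolding g_def by (auto simp: indicator_def)
  define \<Theta> where "\<Theta> = (\<lambda>k. if k = i then (\<Omega> i \<union> A) - B else if k = j then (\<Omega> j - A) \<union> B else \<Omega> k)"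
  have inA: "y \<in> \<Omega> k \<longleftrightarrow> k = j" if "y \<in> A" "k < m" for y k
    using that AO Od[of k j] ij by blast
  have inB: "y \<in> \<Omega> k \<longleftrightarrow> k = i" if "y \<in> B" "k < m" for y k
    using that BO Od[of k i] ij by blast
  have memT: "y \<in> \<Theta> k \<longleftrightarrow> (if y \<in> A then k = i else if y \<in> B then k = j else y \<in> \<Omega> k)" if k: "k < m" for y k
  proof (cases "y \<in> A")
    case True
    then have "y \<notin> B" using AB by auto
    then show ?thesis using True inA[OF True k] inA[OF True ij(1)] ij by (auto simp: \<Theta>_def)
  next
    case False
    note nA = False
    show ?thesis
    proof (cases "y \<in> B")
      case True
      then show ?thesis using nA inB[OF True k] inB[OF True ij(2)] ij by (auto simp: \<Theta>_def)
    next
      case False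
      then show ?thesis using nA by (auto simp: \<Theta>_def)
    qed
  qed
  have part2: "is_partition m \<Theta>"
    unfolding is_partition_def
  proof (intro conjI allI impI)
    fix k assume "k < m"
    then show "\<Theta> k \<in> sets lebesgue" using Om unfolding \<Theta>_def by auto
  next
    fix k l assume kl: "k < m" "l < m" "k \<noteq> l"
    show "\<Theta> k \<inter> \<Theta> l = {}"
    proof (rule equals0I)
      fix y assume "y \<in> \<Theta> k \<inter> \<Theta> l"
      then have "y \<in> \<Theta> k" "y \<in> \<Theta> l" by auto
      then show False using memT[OF kl(1), of y] memT[OF kl(2), of y] Od[OF kl] kl(3)
        by (auto split: if_splits)
    qed
  next
    show "(\<Union>k<m. \<Theta> k) = UNIV"
    proof (rule set_eqI)
      fix y
      have "y \<in> (\<Union>k<m. \<Theta> k)"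
      proof (cases "y \<in> A \<or> y \<in> B")
        case True
        show ?thesis
        proof (cases "y \<in> A")
          case True then show ?thesis using memT[OF ij(1), of y] ij by auto
        next
          case False then have "y \<in> B" using \<open>y \<in> A \<or> y \<in> B\<close> by blast
          then show ?thesis using False memT[OF ij(2), of y] ij by auto
        qed
      next
        case False
        obtain k where "k < m" "y \<in> \<Omega> k" using Ou by blast
        then show ?thesis using memT[of k y] False by auto
      qed
      then show "y \<in> (\<Union>k<m. \<Theta> k) \<longleftrightarrow> y \<in> UNIV" by simp
    qed
  qed
  have indi: "indicator (\<Theta> i) = (\<lambda>y. indicator (\<Omega> i) y + g y)"
    using memT[OF ij(1)] inA[OF _ ij(1)] inB[OF _ ij(1)] AB' ij
    by (auto simp: g_def indicator_def fun_eq_iff)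
  have indj: "indicator (\<Theta> j) = (\<lambda>y. indicator (\<Omega> j) y - g y)"
    using memT[OF ij(2)] inA[OF _ ij(2)] inB[OF _ ij(2)] AB' ij
    by (auto simp: g_def indicator_def fun_eq_iff)
  have iOi: "integrable lebesgue (\<lambda>y. indicator (\<Omega> i) y * gauss_dens y :: real)" by (rule ind_int) (rule Oi)
  have iOj: "integrable lebesgue (\<lambda>y. indicator (\<Omega> j) y * gauss_dens y :: real)" by (rule ind_int) (rule Oj)
  have iA: "integrable lebesgue (\<lambda>y. indicator A y * gauss_dens y :: real)" by (rule ind_int) (rule Am)
  have iB: "integrable lebesgue (\<lambda>y. indicator B y * gauss_dens y :: real)" by (rule ind_int) (rule Bm)
  have gmT: "\<forall>k<m. gauss_measure (\<Theta> k) = a k"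
  proof (intro allI impI)
    fix k assume k: "k < m"
    consider "k = i" | "k = j" | "k \<noteq> i \<and> k \<noteq> j" by blast
    then show "gauss_measure (\<Theta> k) = a k"
    proof cases
      case 1
      have "gauss_measure (\<Theta> i) = (\<integral>y. (indicator (\<Omega> i) y * gauss_dens y + indicator A y * gauss_dens y) - indicator B y * gauss_dens y \<partial>lebesgue)"
        unfolding gauss_measure_def indi g_def by (intro Bochner_Integration.integral_cong) (simp_all add: algebra_simps)
      also have "\<dots> = gauss_measure (\<Omega> i) + gauss_measure A - gauss_measure B"
        using iOi iA iB unfolding gauss_measure_def by simp
      also have "\<dots> = a i" using gA gB meas ij by simp
      finally show ?thesis using 1 by simp
    next
      case 2
      have "gauss_measure (\<Theta> j) = (\<integral>y. (indicator (\<Omega> j) y * gauss_dens y - indicator A y * gauss_dens y) + indicator B y * gauss_dens y \<partial>lebesgue)"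
        unfolding gauss_measure_def indj g_def by (intro Bochner_Integration.integral_cong) (simp_all add: algebra_simps)
      also have "\<dots> = gauss_measure (\<Omega> j) - gauss_measure A + gauss_measure B"
        using iOj iA iB unfolding gauss_measure_def by simp
      also have "\<dots> = a j" using gA gB meas ij by simp
      finally show ?thesis using 2 by simp
    next
      case 3
      then show ?thesis using meas k by (simp add: \<Theta>_def)
    qed
  qed
  have le: "noise_stab \<rho> m \<Theta> \<le> noise_stab \<rho> m \<Omega>" using maxi part2 gmT by blast
  define E where "E = (\<lambda>S::'a set. \<integral>x. indicator S x * ou_op \<rho> (indicator S) x * gauss_dens x \<partial>lebesgue)"
  have ns: "noise_stab \<rho> m X = (\<Sum>k<m. E (X k))" for X unfolding noise_stab_def E_def by simp
  have "noise_stab \<rho> m \<Theta> = (\<Sum>k<m. E (\<Omega> k) + ((if k = i then E (\<Theta> i) - E (\<Omega> i) else 0) + (if k = j then E (\<Theta> j) - E (\<Omega> j) else 0)))"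
    unfolding ns using ij by (intro sum.cong refl) (auto simp: \<Theta>_def)
  also have "\<dots> = noise_stab \<rho> m \<Omega> + (E (\<Theta> i) - E (\<Omega> i)) + (E (\<Theta> j) - E (\<Omega> j))"
    unfolding ns sum.distrib using ij by simp
  finally have diff: "noise_stab \<rho> m \<Theta> - noise_stab \<rho> m \<Omega> = (E (\<Theta> i) - E (\<Omega> i)) + (E (\<Theta> j) - E (\<Omega> j))"
    by simp
  have uim[measurable]: "(indicator (\<Omega> i) :: 'a \<Rightarrow> real) \<in> borel_measurable lebesgue" by measurable
  have ujm[measurable]: "(indicator (\<Omega> j) :: 'a \<Rightarrow> real) \<in> borel_measurable lebesgue" by measurable
  have ib: "\<bar>indicator S z :: real\<bar> \<le> 1" for S and z :: 'a by (auto simp: indicator_def)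
  have Ei: "E (\<Theta> i) = E (\<Omega> i) + 2 * (\<integral>x. g x * ou_op \<rho> (indicator (\<Omega> i)) x * gauss_dens x \<partial>lebesgue)
      + (\<integral>x. g x * ou_op \<rho> g x * gauss_dens x \<partial>lebesgue)"
    unfolding E_def indi using expand(1)[OF uim gm ib gb] by simp
  have Ej: "E (\<Theta> j) = E (\<Omega> j) - 2 * (\<integral>x. g x * ou_op \<rho> (indicator (\<Omega> j)) x * gauss_dens x \<partial>lebesgue)
      + (\<integral>x. g x * ou_op \<rho> g x * gauss_dens x \<partial>lebesgue)"
    unfolding E_def indj using expand(2)[OF ujm gm ib gb] by simp
  have X: "(\<integral>x. g x * ou_op \<rho> (indicator (\<Omega> i)) x * gauss_dens x \<partial>lebesgue) - (\<integral>x. g x * ou_op \<rho> (indicator (\<Omega> j)) x * gauss_dens x \<partial>lebesgue)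
      = (\<integral>x. g x * ou_op \<rho> h x * gauss_dens x \<partial>lebesgue)"
  proof -
    have "(\<integral>x. g x * ou_op \<rho> (indicator (\<Omega> i)) x * gauss_dens x \<partial>lebesgue) - (\<integral>x. g x * ou_op \<rho> (indicator (\<Omega> j)) x * gauss_dens x \<partial>lebesgue)
      = (\<integral>x. g x * ou_op \<rho> (indicator (\<Omega> i)) x * gauss_dens x - g x * ou_op \<rho> (indicator (\<Omega> j)) x * gauss_dens x \<partial>lebesgue)"
      by (rule Bochner_Integration.integral_diff[symmetric]) (intro int3 gm uim ujm gb ib)+
    also have "\<dots> = (\<integral>x. g x * ou_op \<rho> h x * gauss_dens x \<partial>lebesgue)"
      unfolding h_def ou_add(2)[OF uim ujm ib ib] by (simp add: algebra_simps)
    finally show ?thesis .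
  qed
  have fxd: "f x1 - f x2 = 3 * \<delta>" unfolding \<delta>_def by simp
  have low: "(\<integral>x. g x * ou_op \<rho> h x * gauss_dens x \<partial>lebesgue) \<ge> \<delta> * t"
  proof -
    have iAh: "integrable lebesgue (\<lambda>x. indicator A x * ou_op \<rho> h x * gauss_dens x)" by (intro int3) (auto intro: hb)
    have iBh: "integrable lebesgue (\<lambda>x. indicator B x * ou_op \<rho> h x * gauss_dens x)" by (intro int3) (auto intro: hb)
    have sp: "(\<integral>x. g x * ou_op \<rho> h x * gauss_dens x \<partial>lebesgue) =
        (\<integral>x. indicator A x * ou_op \<rho> h x * gauss_dens x \<partial>lebesgue) - (\<integral>x. indicator B x * ou_op \<rho> h x * gauss_dens x \<partial>lebesgue)"
      unfolding g_def using iAh iBh by (simp add: left_diff_distrib)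
    have LA: "(f x1 - \<delta>) * t \<le> (\<integral>x. indicator A x * ou_op \<rho> h x * gauss_dens x \<partial>lebesgue)"
    proof -
      have "(f x1 - \<delta>) * t = (\<integral>x. (f x1 - \<delta>) * (indicator A x * gauss_dens x) \<partial>lebesgue)"
        using gA unfolding gauss_measure_def by simp
      also have "\<dots> \<le> (\<integral>x. indicator A x * ou_op \<rho> h x * gauss_dens x \<partial>lebesgue)"
      proof (rule integral_mono[OF _ iAh])
        show "integrable lebesgue (\<lambda>x. (f x1 - \<delta>) * (indicator A x * gauss_dens x))" using iA by simp
        fix y
        show "(f x1 - \<delta>) * (indicator A y * gauss_dens y) \<le> indicator A y * ou_op \<rho> h y * gauss_dens y"
        proof (cases "y \<in> A")
          case True
          then have "f x1 - \<delta> \<le> ou_op \<rho> h y" using fA[OF Ar[OF True]] unfolding f_def by simp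
          then show ?thesis using True by (simp add: mult_right_mono)
        qed simp
      qed
      finally show ?thesis .
    qed
    have LB: "(\<integral>x. indicator B x * ou_op \<rho> h x * gauss_dens x \<partial>lebesgue) \<le> (f x2 + \<delta>) * t"
    proof -
      have "(\<integral>x. indicator B x * ou_op \<rho> h x * gauss_dens x \<partial>lebesgue) \<le> (\<integral>x. (f x2 + \<delta>) * (indicator B x * gauss_dens x) \<partial>lebesgue)"
      proof (rule integral_mono[OF iBh])
        show "integrable lebesgue (\<lambda>x. (f x2 + \<delta>) * (indicator B x * gauss_dens x))" using iB by simp
        fix y
        show "indicator B y * ou_op \<rho> h y * gauss_dens y \<le> (f x2 + \<delta>) * (indicator B y * gauss_dens y)"
        proof (cases "y \<in> B")
          case True
          then have "ou_op \<rho> h y \<le> f x2 + \<delta>" using fB[OF Br[OF True]] unfolding f_def by simp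
          then show ?thesis using True by (simp add: mult_right_mono)
        qed simp
      qed
      also have "\<dots> = (f x2 + \<delta>) * t"
        using gB unfolding gauss_measure_def by simp
      finally show ?thesis .
    qed
    have "(f x1 - \<delta>) * t - (f x2 + \<delta>) * t = \<delta> * t" using fxd by (simp add: algebra_simps)
    then show ?thesis using sp LA LB by linarith
  qed
  have ig: "integrable lebesgue (\<lambda>x. \<bar>g x\<bar> * gauss_dens x)"
    apply (rule Bochner_Integration.integrable_bound[OF gint])
    subgoal by measurable
    using gb by (intro AE_I2) (simp add: abs_mult mult_left_le_one_le)
  have ag: "(\<integral>x. \<bar>g x\<bar> * gauss_dens x \<partial>lebesgue) = 2 * t"
  proof -
    have "(\<integral>x. \<bar>g x\<bar> * gauss_dens x \<partial>lebesgue) = (\<integral>x. indicator A x * gauss_dens x + indicator B x * gauss_dens x \<partial>lebesgue)"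
      using AB' by (intro Bochner_Integration.integral_cong) (auto simp: g_def indicator_def)
    also have "\<dots> = 2 * t" using iA iB gA gB unfolding gauss_measure_def by simp
    finally show ?thesis .
  qed
  have supp: "g z = 0" if "norm z > R" for z
  proof -
    have nA: "z \<notin> A"
    proof
      assume "z \<in> A"
      then have "dist z x1 < r" by (rule Ar)
      moreover have "norm z \<le> norm x1 + dist z x1" by (metis dist_norm norm_triangle_sub add.commute)
      ultimately show False using that norm_ge_zero[of x2] unfolding R_def by linarith
    qed
    have nB: "z \<notin> B"
    proof
      assume "z \<in> B"
      then have "dist z x2 < r" by (rule Br)
      moreover have "norm z \<le> norm x2 + dist z x2" by (metis dist_norm norm_triangle_sub add.commute)
      ultimately show False using that norm_ge_zero[of x1] unfolding R_def by linarith
    qed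
    show ?thesis using nA nB by (simp add: g_def)
  qed
  have Tg: "\<bar>ou_op \<rho> g x\<bar> \<le> C * (2 * t)" for x
    using ou_small[OF gm gb supp, where x=x] ag unfolding C_def by simp
  have up: "\<bar>\<integral>x. g x * ou_op \<rho> g x * gauss_dens x \<partial>lebesgue\<bar> \<le> 4 * C * t\<^sup>2"
  proof -
    have "\<bar>\<integral>x. g x * ou_op \<rho> g x * gauss_dens x \<partial>lebesgue\<bar> \<le> (\<integral>x. (C * (2 * t)) * (\<bar>g x\<bar> * gauss_dens x) \<partial>lebesgue)"
    proof (rule integral_abs_bound_integral)
      show "integrable lebesgue (\<lambda>x. g x * ou_op \<rho> g x * gauss_dens x)" by (intro int3 gm gb)
      show "integrable lebesgue (\<lambda>x. (C * (2 * t)) * (\<bar>g x\<bar> * gauss_dens x))" using ig by simp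
      fix x
      have "\<bar>g x * ou_op \<rho> g x * gauss_dens x\<bar> = \<bar>g x\<bar> * \<bar>ou_op \<rho> g x\<bar> * gauss_dens x"
        by (simp add: abs_mult)
      also have "\<dots> \<le> \<bar>g x\<bar> * (C * (2 * t)) * gauss_dens x"
        using Tg[of x] by (intro mult_right_mono mult_left_mono) auto
      finally show "\<bar>g x * ou_op \<rho> g x * gauss_dens x\<bar> \<le> (C * (2 * t)) * (\<bar>g x\<bar> * gauss_dens x)"
        by (simp add: ac_simps)
    qed
    also have "\<dots> = 4 * C * t\<^sup>2" using ag by (simp add: power2_eq_square)
    finally show ?thesis .
  qed
  have "noise_stab \<rho> m \<Theta> - noise_stab \<rho> m \<Omega> =
      2 * (\<integral>x. g x * ou_op \<rho> h x * gauss_dens x \<partial>lebesgue) + 2 * (\<integral>x. g x * ou_op \<rho> g x * gauss_dens x \<partial>lebesgue)"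
    using diff Ei Ej X by (simp add: algebra_simps)
  moreover have "8 * C * t\<^sup>2 \<le> \<delta> * t" using t8 t(1) by (simp add: power2_eq_square mult_right_mono)
  ultimately have "noise_stab \<rho> m \<Theta> - noise_stab \<rho> m \<Omega> \<ge> \<delta> * t" using low up by linarith
  moreover have "\<delta> * t > 0" using \<delta> t(1) by simp
  ultimately show False using le by linarith
qed

end

theorem lemma3p2:
  fixes \<rho> :: real and m :: nat and a :: "nat \<Rightarrow> real"
    and \<Omega> :: "nat \<Rightarrow> 'a::euclidean_space set"
  assumes "0 < \<rho>" "\<rho> < 1"
    and "DIM('a) \<ge> 2"
    and "m \<ge> 2"
    and "\<forall>i<m. a i > 0" "(\<Sum>i<m. a i) = 1"
    and "is_partition m \<Omega>" "\<forall>i<m. gauss_measure (\<Omega> i) = a i"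
    and "\<forall>\<Theta> :: nat \<Rightarrow> 'a set. is_partition m \<Theta> \<and> (\<forall>i<m. gauss_measure (\<Theta> i) = a i)
           \<longrightarrow> noise_stab \<rho> m \<Theta> \<le> noise_stab \<rho> m \<Omega>"
  shows "\<forall>i j. i < j \<and> j < m \<longrightarrow>
           (\<exists>c::real. \<forall>x \<in> reduced_boundary (\<Omega> i) \<inter> reduced_boundary (\<Omega> j).
              ou_op \<rho> (\<lambda>y. indicator (\<Omega> i) y - indicator (\<Omega> j) y) x = c)"
proof -
  have Om[measurable]: "\<And>k. k < m \<Longrightarrow> \<Omega> k \<in> sets lebesgue"
    and Od: "\<And>k l. k < m \<Longrightarrow> l < m \<Longrightarrow> k \<noteq> l \<Longrightarrow> \<Omega> k \<inter> \<Omega> l = {}"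
    and Ou: "(\<Union>k<m. \<Omega> k) = UNIV"
    using assms(7) unfolding is_partition_def by auto
  have ii: "integrable lebesgue (\<lambda>x. indicator (\<Omega> k) x * gauss_dens x :: real)" if k: "k < m" for k
  proof (rule ccontr)
    assume "\<not> integrable lebesgue (\<lambda>x. indicator (\<Omega> k) x * gauss_dens x :: real)"
    then have "gauss_measure (\<Omega> k) = 0" unfolding gauss_measure_def by (rule not_integrable_integral_eq)
    then show False using assms(5,8) k by auto
  qed
  have sumind: "(\<Sum>k<m. indicator (\<Omega> k) x * gauss_dens x) = (gauss_dens x :: real)" for x :: 'a
  proof -
    obtain k0 where k0: "k0 < m" "x \<in> \<Omega> k0" using Ou by blast
    have "(\<Sum>k<m. indicator (\<Omega> k) x * gauss_dens x) = (\<Sum>k<m. if k = k0 then gauss_dens x else (0::real))"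
    proof (rule sum.cong[OF refl])
      fix k assume "k \<in> {..<m}"
      then show "indicator (\<Omega> k) x * gauss_dens x = (if k = k0 then gauss_dens x else 0)"
        using Od[of k k0] k0 by (auto simp: indicator_def)
    qed
    also have "\<dots> = gauss_dens x" using k0 by simp
    finally show ?thesis .
  qed
  have gint: "integrable lebesgue (gauss_dens :: 'a \<Rightarrow> real)"
  proof -
    have "integrable lebesgue (\<lambda>x. \<Sum>k<m. indicator (\<Omega> k) x * gauss_dens x :: real)"
      by (rule Bochner_Integration.integrable_sum) (use ii in auto)
    then show ?thesis unfolding sumind .
  qed
  have gone: "(\<integral>x. gauss_dens (x::'a) \<partial>lebesgue) = 1"
  proof -
    have "(\<integral>x. gauss_dens (x::'a) \<partial>lebesgue) = (\<integral>x. (\<Sum>k<m. indicator (\<Omega> k) x * gauss_dens x) \<partial>lebesgue)"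
      unfolding sumind ..
    also have "\<dots> = (\<Sum>k<m. gauss_measure (\<Omega> k))"
      unfolding gauss_measure_def by (rule Bochner_Integration.integral_sum) (use ii in auto)
    also have "\<dots> = 1" using assms(6,8) by simp
    finally show ?thesis .
  qed
  interpret g: gctx \<rho> by unfold_locales (use assms(1,2) gint gone in auto)
  show ?thesis
  proof (intro allI impI)
    fix i j assume ij: "i < j \<and> j < m"
    let ?f = "ou_op \<rho> (\<lambda>y. indicator (\<Omega> i) y - indicator (\<Omega> j) y)"
    have le: "?f x1 \<le> ?f x2" if "x1 \<in> reduced_boundary (\<Omega> i) \<inter> reduced_boundary (\<Omega> j)"
      "x2 \<in> reduced_boundary (\<Omega> i) \<inter> reduced_boundary (\<Omega> j)" for x1 x2
      by (rule g.swap[OF assms(7,8,9)]) (use ij that in auto)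
    show "\<exists>c. \<forall>x \<in> reduced_boundary (\<Omega> i) \<inter> reduced_boundary (\<Omega> j). ?f x = c"
    proof (cases "reduced_boundary (\<Omega> i) \<inter> reduced_boundary (\<Omega> j) = {}")
      case True then show ?thesis by auto
    next
      case False
      then obtain x0 where x0: "x0 \<in> reduced_boundary (\<Omega> i) \<inter> reduced_boundary (\<Omega> j)" by blast
      show ?thesis
        by (rule exI[of _ "?f x0"]) (use le x0 in \<open>auto intro: order.antisym\<close>)
    qed
  qed
qed

end
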